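(* Let $D$ be a domain in $\mathbb{C}^2$. If $\eta_D\in\mathcal M(D)$ is a continuous pseudometric, then $\widetilde{\mathbb W}\eta_D$ is upper semicontinuous on $D\times\mathbb{C}^2$.
   Context: A pseudometric on a domain $D\subset\mathbb{C}^n$ is a function $\eta:D\times\mathbb{C}^n\to[0,\infty)$ with $\eta(a;\lambda X)=|\lambda|\eta(a;X)$ for $\lambda\in\mathbb{C}$. $\mathcal M(D)$: pseudometrics $\eta$ on $D$ such that for every $a\in D$ there are $M,r>0$ with $\eta(z;X)\le M\|X\|$ for $z$ in the Euclidean ball $\mathbb{B}(a,r)\subset D$, $X\in\mathbb{C}^n$. Wu pseudometric: for $\eta\in\mathcal M(D)$ and $a\in D$, let $\widehat\eta(a;X)=\sup p(X)$ over all $\mathbb{C}$-seminorms $p\le\eta(a;\cdot)$. Let $V_\eta(a)=\{X:\widehat\eta(a;X)=0\}$, $U_\eta(a)$ its orthogonal complement (standard Hermitian product), $m(\eta,a)=\dim U_\eta(a)$. Let $\mathcal F(\eta,a)$ be the set of positive semidefinite Hermitian forms $s$ on $\mathbb{C}^n$ with $\sqrt{s(X,X)}\le\eta(a;X)$ for all $X$, ordered by $\alpha\prec\beta$ iff $\det[\alpha(e_j,e_k)]\le\det[\beta(e_j,e_k)]$ for a basis $(e_j)$ of $U_\eta(a)$; it has a unique maximal element $s(\eta,a)$. Set $\widetilde{\mathbb W}\eta(a;X)=\sqrt{s(\eta,a)(X,X)}$. *)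

theory Defs
  imports "HOL-Analysis.Analysis"
begin

text \<open>The space C^2 is the type complex^2 (Euclidean norm).
  Pseudometrics are functions eta :: complex^2 => complex^2 => real, eta a X.\<close>

type_synonym c2 = "complex ^ 2"

definition herm :: "c2 \<Rightarrow> c2 \<Rightarrow> complex" where
  "herm X Y = (\<Sum>i\<in>UNIV. X $ i * cnj (Y $ i))"

definition is_domain :: "c2 set \<Rightarrow> bool" where
  "is_domain D \<longleftrightarrow> open D \<and> connected D \<and> D \<noteq> {}"

definition pseudometric_on :: "c2 set \<Rightarrow> (c2 \<Rightarrow> c2 \<Rightarrow> real) \<Rightarrow> bool" where
  "pseudometric_on D \<eta> \<longleftrightarrow>
     (\<forall>a\<in>D. \<forall>X. 0 \<le> \<eta> a X) \<and>
     (\<forall>a\<in>D. \<forall>X. \<forall>c::complex. \<eta> a (c *s X) = norm c * \<eta> a X)"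

definition classM :: "c2 set \<Rightarrow> (c2 \<Rightarrow> c2 \<Rightarrow> real) set" where
  "classM D = {\<eta>. pseudometric_on D \<eta> \<and>
     (\<forall>a\<in>D. \<exists>M r. M > 0 \<and> r > 0 \<and> ball a r \<subseteq> D \<and>
        (\<forall>z\<in>ball a r. \<forall>X. \<eta> z X \<le> M * norm X))}"

definition cseminorm :: "(c2 \<Rightarrow> real) \<Rightarrow> bool" where
  "cseminorm p \<longleftrightarrow> (\<forall>X Y. p (X + Y) \<le> p X + p Y) \<and>
     (\<forall>X. \<forall>c::complex. p (c *s X) = norm c * p X)"

definition hat :: "(c2 \<Rightarrow> c2 \<Rightarrow> real) \<Rightarrow> c2 \<Rightarrow> c2 \<Rightarrow> real" where
  "hat \<eta> a X = Sup {p X | p. cseminorm p \<and> (\<forall>Y. p Y \<le> \<eta> a Y)}"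

definition Vset :: "(c2 \<Rightarrow> c2 \<Rightarrow> real) \<Rightarrow> c2 \<Rightarrow> c2 set" where
  "Vset \<eta> a = {X. hat \<eta> a X = 0}"

definition Uset :: "(c2 \<Rightarrow> c2 \<Rightarrow> real) \<Rightarrow> c2 \<Rightarrow> c2 set" where
  "Uset \<eta> a = {Y. \<forall>X\<in>Vset \<eta> a. herm Y X = 0}"

definition cbasis :: "c2 set \<Rightarrow> nat \<Rightarrow> (nat \<Rightarrow> c2) \<Rightarrow> bool" where
  "cbasis U m e \<longleftrightarrow>
     (\<forall>c::nat \<Rightarrow> complex. (\<Sum>j<m. c j *s e j) = 0 \<longrightarrow> (\<forall>j<m. c j = 0)) \<and>
     U = {(\<Sum>j<m. c j *s e j) | c. True}"

definition Ubasis :: "(c2 \<Rightarrow> c2 \<Rightarrow> real) \<Rightarrow> c2 \<Rightarrow> nat \<times> (nat \<Rightarrow> c2)" where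
  "Ubasis \<eta> a = (SOME (m, e). cbasis (Uset \<eta> a) m e)"

definition mdim :: "(c2 \<Rightarrow> c2 \<Rightarrow> real) \<Rightarrow> c2 \<Rightarrow> nat" where
  "mdim \<eta> a = fst (Ubasis \<eta> a)"

definition psd_herm_form :: "(c2 \<Rightarrow> c2 \<Rightarrow> complex) \<Rightarrow> bool" where
  "psd_herm_form s \<longleftrightarrow>
     (\<forall>X Y Z. s (X + Y) Z = s X Z + s Y Z) \<and>
     (\<forall>X Z. \<forall>c::complex. s (c *s X) Z = c * s X Z) \<and>
     (\<forall>X Y. s Y X = cnj (s X Y)) \<and>
     (\<forall>X. Im (s X X) = 0 \<and> 0 \<le> Re (s X X))"

definition Fset :: "(c2 \<Rightarrow> c2 \<Rightarrow> real) \<Rightarrow> c2 \<Rightarrow> (c2 \<Rightarrow> c2 \<Rightarrow> complex) set" where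
  "Fset \<eta> a = {s. psd_herm_form s \<and> (\<forall>X. sqrt (Re (s X X)) \<le> \<eta> a X)}"

definition gram_det :: "(c2 \<Rightarrow> c2 \<Rightarrow> complex) \<Rightarrow> nat \<Rightarrow> (nat \<Rightarrow> c2) \<Rightarrow> complex" where
  "gram_det \<alpha> m e =
     (\<Sum>p\<in>{p. p permutes {..<m}}. of_int (sign p) * (\<Prod>j<m. \<alpha> (e j) (e (p j))))"

definition Fle :: "(c2 \<Rightarrow> c2 \<Rightarrow> real) \<Rightarrow> c2 \<Rightarrow>
    (c2 \<Rightarrow> c2 \<Rightarrow> complex) \<Rightarrow> (c2 \<Rightarrow> c2 \<Rightarrow> complex) \<Rightarrow> bool" where
  "Fle \<eta> a \<alpha> \<beta> \<longleftrightarrow>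
     (case Ubasis \<eta> a of (m, e) \<Rightarrow> Re (gram_det \<alpha> m e) \<le> Re (gram_det \<beta> m e))"

definition smax :: "(c2 \<Rightarrow> c2 \<Rightarrow> real) \<Rightarrow> c2 \<Rightarrow> (c2 \<Rightarrow> c2 \<Rightarrow> complex)" where
  "smax \<eta> a = (THE s. s \<in> Fset \<eta> a \<and> (\<forall>t\<in>Fset \<eta> a. Fle \<eta> a t s))"

definition Wtilde :: "(c2 \<Rightarrow> c2 \<Rightarrow> real) \<Rightarrow> c2 \<Rightarrow> c2 \<Rightarrow> real" where
  "Wtilde \<eta> a X = sqrt (Re (smax \<eta> a X X))"

definition upper_semicontinuous_on :: "('a::topological_space) set \<Rightarrow> ('a \<Rightarrow> real) \<Rightarrow> bool" where
  "upper_semicontinuous_on S f \<longleftrightarrow>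
     (\<forall>x\<in>S. \<forall>e>0. \<forall>\<^sub>F y in at x within S. f y < f x + e)"

end

theory Submission
  imports Defs
begin


definition de1 :: c2 where "de1 = axis 1 1"
definition de2 :: c2 where "de2 = axis 2 1"
definition det2 :: "c2 \<Rightarrow> c2 \<Rightarrow> complex" where "det2 u w = u$1 * w$2 - u$2 * w$1"

lemma c2_decomp: "(Z::c2) = Z$1 *s de1 + Z$2 *s de2"
  by (simp add: vec_eq_iff forall_2 de1_def de2_def axis_def)

lemma norm_c2: "norm (Z::c2) = sqrt ((cmod (Z$1))\<^sup>2 + (cmod (Z$2))\<^sup>2)"
  by (simp add: norm_vec_def L2_set_def sum_2)

lemma det2_lin: "det2 (a *s u + b *s w) x = a * det2 u x + b * det2 w x"
  "det2 x (a *s u + b *s w) = a * det2 x u + b * det2 x w"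
  by (simp_all add: det2_def algebra_simps)

lemma span2_aux: "(d::complex) = a1*b2 - a2*b1 \<Longrightarrow> (c1*b2 - c2*b1)*a1 + (a1*c2 - a2*c1)*b1 = c1 * d"
  "(d::complex) = a1*b2 - a2*b1 \<Longrightarrow> (c1*b2 - c2*b1)*a2 + (a1*c2 - a2*c1)*b2 = c2 * d"
  by algebra+

lemma span2:
  assumes "det2 v w \<noteq> 0"
  shows "Z = (det2 Z w / det2 v w) *s v + (det2 v Z / det2 v w) *s w"
proof -
  let ?d = "v$1 * w$2 - v$2 * w$1"
  have d: "?d \<noteq> 0" using assms by (simp add: det2_def)
  have "Z$1 = ((Z$1 * w$2 - Z$2 * w$1) * v$1 + (v$1 * Z$2 - v$2 * Z$1) * w$1) / ?d"
    unfolding span2_aux(1)[OF refl] using d by simp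
  moreover have "Z$2 = ((Z$1 * w$2 - Z$2 * w$1) * v$2 + (v$1 * Z$2 - v$2 * Z$1) * w$2) / ?d"
    unfolding span2_aux(2)[OF refl] using d by simp
  ultimately show ?thesis by (simp add: vec_eq_iff forall_2 det2_def add_divide_distrib mult.commute)
qed

lemma det2_zero_mult:
  assumes "det2 v w = 0" "v \<noteq> 0"
  shows "\<exists>t. w = t *s v"
proof (cases "v$1 = 0")
  case True
  then have "v$2 \<noteq> 0" using assms(2) by (auto simp: vec_eq_iff forall_2)
  then show ?thesis using assms True
    by (intro exI[of _ "w$2 / v$2"]) (auto simp: vec_eq_iff forall_2 det2_def field_simps)
next
  case False
  then show ?thesis using assms
    by (intro exI[of _ "w$1 / v$1"]) (auto simp: vec_eq_iff forall_2 det2_def field_simps)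
qed

section \<open>forms\<close>

lemma psd_add1: "psd_herm_form s \<Longrightarrow> s (X + Y) Z = s X Z + s Y Z"
  unfolding psd_herm_form_def by blast
lemma psd_mult1: "psd_herm_form s \<Longrightarrow> s (c *s X) Z = c * s X Z"
  unfolding psd_herm_form_def by blast
lemma psd_herm: "psd_herm_form s \<Longrightarrow> s Y X = cnj (s X Y)"
  unfolding psd_herm_form_def by blast
lemma psd_add2: assumes a: "psd_herm_form s" shows "s Z (X + Y) = s Z X + s Z Y"
proof -
  have "s Z (X+Y) = cnj (s (X+Y) Z)" by (rule psd_herm[OF a])
  also have "\<dots> = cnj (s X Z) + cnj (s Y Z)" by (simp add: psd_add1[OF a])
  also have "\<dots> = s Z X + s Z Y" using psd_herm[OF a, of Z X] psd_herm[OF a, of Z Y] by simp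
  finally show ?thesis .
qed
lemma psd_mult2: assumes a: "psd_herm_form s" shows "s Z (c *s X) = cnj c * s Z X"
proof -
  have "s Z (c *s X) = cnj (s (c *s X) Z)" by (rule psd_herm[OF a])
  also have "\<dots> = cnj c * cnj (s X Z)" by (simp add: psd_mult1[OF a])
  also have "\<dots> = cnj c * s Z X" using psd_herm[OF a, of Z X] by simp
  finally show ?thesis .
qed
lemma psd_Im: "psd_herm_form s \<Longrightarrow> Im (s X X) = 0"
  unfolding psd_herm_form_def by blast
lemma psd_Re: "psd_herm_form s \<Longrightarrow> 0 \<le> Re (s X X)"
  unfolding psd_herm_form_def by blast
lemma psd_real: "psd_herm_form s \<Longrightarrow> s X X = complex_of_real (Re (s X X))"
  by (simp add: complex_eq_iff psd_Im)

lemma psd_expand2: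
  assumes "psd_herm_form s"
  shows "s (a *s u + b *s w) (c *s u + d *s w) =
     a * cnj c * s u u + a * cnj d * s u w + b * cnj c * s w u + b * cnj d * s w w"
  using assms by (simp add: psd_add1 psd_add2 psd_mult1 psd_mult2 algebra_simps)

definition mkform :: "complex \<times> complex \<times> complex \<times> complex \<Rightarrow> c2 \<Rightarrow> c2 \<Rightarrow> complex" where
  "mkform q Z W = Z$1 * cnj (W$1) * fst q + Z$1 * cnj (W$2) * fst (snd q)
     + Z$2 * cnj (W$1) * fst (snd (snd q)) + Z$2 * cnj (W$2) * snd (snd (snd q))"

definition coord :: "(c2 \<Rightarrow> c2 \<Rightarrow> complex) \<Rightarrow> complex \<times> complex \<times> complex \<times> complex" where
  "coord s = (s de1 de1, s de1 de2, s de2 de1, s de2 de2)"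

lemma psd_mkform: "psd_herm_form s \<Longrightarrow> s = mkform (coord s)"
proof (intro ext)
  fix Z W assume a: "psd_herm_form s"
  have "s Z W = s (Z$1 *s de1 + Z$2 *s de2) (W$1 *s de1 + W$2 *s de2)"
    by (simp only: c2_decomp[symmetric])
  also have "\<dots> = mkform (coord s) Z W"
    unfolding psd_expand2[OF a] by (simp add: mkform_def coord_def algebra_simps)
  finally show "s Z W = mkform (coord s) Z W" .
qed

lemma de_vals: "de1$1 = 1" "de1$2 = 0" "de2$1 = 0" "de2$2 = 1"
  by (simp_all add: de1_def de2_def axis_def)

lemma coord_mkform: "coord (mkform q) = q"
  by (simp add: coord_def mkform_def de_vals)

definition dstd :: "(c2 \<Rightarrow> c2 \<Rightarrow> complex) \<Rightarrow> complex" where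
  "dstd s = s de1 de1 * s de2 de2 - s de1 de2 * s de2 de1"

lemma gram_poly: "((a1::complex) * cnj a1 * q1 + a1 * cnj a2 * q2 + a2 * cnj a1 * q3 + a2 * cnj a2 * q4) *
       (b1 * cnj b1 * q1 + b1 * cnj b2 * q2 + b2 * cnj b1 * q3 + b2 * cnj b2 * q4)
      - (a1 * cnj b1 * q1 + a1 * cnj b2 * q2 + a2 * cnj b1 * q3 + a2 * cnj b2 * q4) *
       (b1 * cnj a1 * q1 + b1 * cnj a2 * q2 + b2 * cnj a1 * q3 + b2 * cnj a2 * q4)
      = (a1 * b2 - a2 * b1) * (cnj a1 * cnj b2 - cnj a2 * cnj b1) * (q1 * q4 - q2 * q3)"
  by algebra

lemma gram2:
  assumes "psd_herm_form s"
  shows "s u u * s w w - s u w * s w u = det2 u w * cnj (det2 u w) * dstd s"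
proof -
  obtain q1 q2 q3 q4 where q: "coord s = (q1,q2,q3,q4)" by (cases "coord s") auto
  have e: "s = mkform (q1,q2,q3,q4)" using psd_mkform[OF assms] unfolding q .
  have d: "dstd s = q1 * q4 - q2 * q3"
    unfolding e by (simp add: dstd_def mkform_def de_vals)
  show ?thesis unfolding d unfolding e mkform_def det2_def fst_conv snd_conv complex_cnj_diff complex_cnj_mult
    by (rule gram_poly)
qed



lemma vec_one_smult: "(1::complex) *s (X::c2) = X"
  by (simp add: vec_eq_iff)

lemma psd_quad:
  assumes a: "psd_herm_form s"
  shows "Re (s (X + c *s Y) (X + c *s Y)) = Re (s X X) + 2 * Re (cnj c * s X Y) + (cmod c)\<^sup>2 * Re (s Y Y)"
proof -
  have "s (X + c *s Y) (X + c *s Y) = s (1 *s X + c *s Y) (1 *s X + c *s Y)" by (simp add: vec_one_smult)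
  also have "\<dots> = s X X + cnj c * s X Y + c * s Y X + c * cnj c * s Y Y"
    unfolding psd_expand2[OF a] by simp
  finally have e: "s (X + c *s Y) (X + c *s Y) = s X X + cnj c * s X Y + c * s Y X + c * cnj c * s Y Y" .
  have h: "s Y X = cnj (s X Y)" by (rule psd_herm[OF a])
  have r: "s Y Y = complex_of_real (Re (s Y Y))" by (rule psd_real[OF a])
  have "c * cnj (s X Y) = cnj (cnj c * s X Y)" by simp
  then have "Re (c * s Y X) = Re (cnj c * s X Y)" unfolding h by simp
  moreover have "Re (c * cnj c * s Y Y) = (cmod c)\<^sup>2 * Re (s Y Y)"
    by (subst r) (simp add: complex_mult_cnj cmod_power2)
  ultimately show ?thesis unfolding e by simp
qed

lemma real_quad_aux:
  fixes a b k :: real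
  assumes "\<And>t. 0 \<le> a - 2 * t * k + t\<^sup>2 * k * b" "0 \<le> k" "0 \<le> b"
  shows "k \<le> a * b"
proof (cases "b > 0")
  case True
  have "0 \<le> a - 2 * (1/b) * k + (1/b)\<^sup>2 * k * b" by (rule assms(1))
  also have "\<dots> = a - k / b" using True by (simp add: power2_eq_square field_simps)
  finally have "k / b \<le> a" by simp
  then show ?thesis using True by (simp add: field_simps mult.commute)
next
  case False
  then have b: "b = 0" using assms(3) by simp
  show ?thesis
  proof (rule ccontr)
    assume "\<not> k \<le> a * b"
    then have k: "k > 0" using b by simp
    have "0 \<le> a - 2 * ((a+1)/(2*k)) * k + ((a+1)/(2*k))\<^sup>2 * k * b" by (rule assms(1))
    also have "\<dots> = -1" using k b by (simp add: field_simps)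
    finally show False by simp
  qed
qed

lemma psd_cs:
  assumes a: "psd_herm_form s"
  shows "(cmod (s X Y))\<^sup>2 \<le> Re (s X X) * Re (s Y Y)"
proof -
  let ?z = "s X Y"
  have "\<And>t. 0 \<le> Re (s X X) - 2 * t * (cmod ?z)\<^sup>2 + t\<^sup>2 * (cmod ?z)\<^sup>2 * Re (s Y Y)"
  proof -
    fix t :: real
    let ?c = "- (complex_of_real t * ?z)"
    have "0 \<le> Re (s (X + ?c *s Y) (X + ?c *s Y))" by (rule psd_Re[OF a])
    also have "\<dots> = Re (s X X) + 2 * Re (cnj ?c * ?z) + (cmod ?c)\<^sup>2 * Re (s Y Y)"
      by (rule psd_quad[OF a])
    also have "Re (cnj ?c * ?z) = - t * (cmod ?z)\<^sup>2"
      unfolding cmod_power2 by (simp add: power2_eq_square algebra_simps)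
    also have "(cmod ?c)\<^sup>2 = t\<^sup>2 * (cmod ?z)\<^sup>2"
      by (simp add: norm_mult power_mult_distrib)
    finally show "0 \<le> Re (s X X) - 2 * t * (cmod ?z)\<^sup>2 + t\<^sup>2 * (cmod ?z)\<^sup>2 * Re (s Y Y)"
      by (simp add: algebra_simps)
  qed
  then show ?thesis by (rule real_quad_aux) (simp_all add: psd_Re[OF a])
qed

lemma psd_vanish:
  assumes a: "psd_herm_form s" and z: "Re (s X X) = 0"
  shows "s X Y = 0" "s Y X = 0"
proof -
  have "(cmod (s X Y))\<^sup>2 \<le> 0" using psd_cs[OF a, of X Y] z by simp
  then show "s X Y = 0" by simp
  then show "s Y X = 0" using psd_herm[OF a, of Y X] by simp
qed

lemma psd_smult_Re: assumes a: "psd_herm_form s"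
  shows "Re (s (c *s X) (c *s X)) = (cmod c)\<^sup>2 * Re (s X X)"
proof -
  have "s (c *s X) (c *s X) = c * cnj c * s X X" by (simp add: psd_mult1[OF a] psd_mult2[OF a])
  also have "\<dots> = complex_of_real ((cmod c)\<^sup>2 * Re (s X X))"
    by (subst psd_real[OF a]) (simp add: complex_mult_cnj cmod_power2)
  finally show ?thesis by simp
qed

lemma psd_seminorm:
  assumes a: "psd_herm_form s"
  shows "cseminorm (\<lambda>Z. sqrt (Re (s Z Z)))"
  unfolding cseminorm_def
proof (intro conjI allI)
  fix X Y
  let ?a = "Re (s X X)" and ?b = "Re (s Y Y)"
  have ab: "0 \<le> ?a" "0 \<le> ?b" using psd_Re[OF a] by auto
  have "Re (s (X + 1 *s Y) (X + 1 *s Y)) = ?a + 2 * Re (s X Y) + ?b"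
    using psd_quad[OF a, of X 1 Y] by simp
  also have "Re (s X Y) \<le> cmod (s X Y)" by (rule complex_Re_le_cmod)
  also have "cmod (s X Y) \<le> sqrt ?a * sqrt ?b"
    using psd_cs[OF a, of X Y] ab by (metis norm_ge_zero real_le_rsqrt real_sqrt_mult)
  finally have "Re (s (X + Y) (X + Y)) \<le> (sqrt ?a + sqrt ?b)\<^sup>2"
    using ab by (simp add: vec_one_smult power2_eq_square algebra_simps)
  then have "sqrt (Re (s (X + Y) (X + Y))) \<le> sqrt ((sqrt ?a + sqrt ?b)\<^sup>2)"
    by (rule real_sqrt_le_mono)
  then show "sqrt (Re (s (X + Y) (X + Y))) \<le> sqrt ?a + sqrt ?b" using ab by simp
next
  fix X and c :: complex
  show "sqrt (Re (s (c *s X) (c *s X))) = cmod c * sqrt (Re (s X X))"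
    by (simp add: psd_smult_Re[OF a] real_sqrt_mult)
qed



section \<open>seminorms\<close>

lemma csn_smult: "cseminorm p \<Longrightarrow> p (c *s X) = cmod c * p X"
  unfolding cseminorm_def by blast
lemma csn_tri: "cseminorm p \<Longrightarrow> p (X + Y) \<le> p X + p Y"
  unfolding cseminorm_def by blast
lemma csn_zero: "cseminorm p \<Longrightarrow> p 0 = 0"
  using csn_smult[of p 0 0] by simp
lemma csn_neg: "cseminorm p \<Longrightarrow> p (- X) = p X"
  using csn_smult[of p "-1" X] by (simp add: vec_eq_iff)
lemma csn_nonneg: assumes "cseminorm p" shows "0 \<le> p X"
proof -
  have "p (X + - X) \<le> p X + p (- X)" by (rule csn_tri[OF assms])
  then show ?thesis using csn_zero[OF assms] csn_neg[OF assms] by simp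
qed
lemma csn_lin2: assumes "cseminorm p"
  shows "p (a *s u + b *s w) \<le> cmod a * p u + cmod b * p w"
  using csn_tri[OF assms, of "a *s u" "b *s w"] csn_smult[OF assms] by simp
lemma csn_diff: assumes "cseminorm p" shows "p X \<le> p (X - Y) + p Y"
  using csn_tri[OF assms, of "X - Y" Y] by simp
lemma csn_diff2: assumes "cseminorm p" shows "p (X - Y) \<le> p X + p Y"
  using csn_tri[OF assms, of X "- Y"] csn_neg[OF assms, of Y] by simp

lemma csn_zero_fun: "cseminorm (\<lambda>_. 0)"
  by (simp add: cseminorm_def)

lemma csn_scale: assumes "cseminorm p" "0 \<le> k" shows "cseminorm (\<lambda>X. k * p X)"
  unfolding cseminorm_def
proof (intro conjI allI)
  fix X Y show "k * p (X + Y) \<le> k * p X + k * p Y"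
    using mult_left_mono[OF csn_tri[OF assms(1), of X Y] assms(2)] by (simp add: distrib_left)
next
  fix X and c :: complex show "k * p (c *s X) = cmod c * (k * p X)"
    using csn_smult[OF assms(1)] by simp
qed

lemma pm_nonneg: "pseudometric_on D \<eta> \<Longrightarrow> a \<in> D \<Longrightarrow> 0 \<le> \<eta> a X"
  unfolding pseudometric_on_def by blast
lemma pm_smult: "pseudometric_on D \<eta> \<Longrightarrow> a \<in> D \<Longrightarrow> \<eta> a (c *s X) = cmod c * \<eta> a X"
  unfolding pseudometric_on_def by blast

lemma hat_bdd: "bdd_above {p X | p. cseminorm p \<and> (\<forall>Y. p Y \<le> \<eta> a Y)}"
  by (rule bdd_aboveI[of _ "\<eta> a X"]) auto

lemma hat_upper: "cseminorm p \<Longrightarrow> (\<forall>Y. p Y \<le> \<eta> a Y) \<Longrightarrow> p X \<le> hat \<eta> a X"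
  unfolding hat_def by (rule cSup_upper[OF _ hat_bdd]) auto

lemma hat_ne: assumes "pseudometric_on D \<eta>" "a \<in> D"
  shows "{p X | p. cseminorm p \<and> (\<forall>Y. p Y \<le> \<eta> a Y)} \<noteq> {}"
  using csn_zero_fun pm_nonneg[OF assms] by blast

lemma hat_le: assumes "pseudometric_on D \<eta>" "a \<in> D"
  shows "hat \<eta> a X \<le> \<eta> a X"
  unfolding hat_def by (rule cSup_least[OF hat_ne[OF assms]]) auto

lemma hat_nonneg: assumes "pseudometric_on D \<eta>" "a \<in> D" shows "0 \<le> hat \<eta> a X"
  using hat_upper[OF csn_zero_fun, of \<eta> a X] pm_nonneg[OF assms] by simp

lemma hat_smult_le: assumes "pseudometric_on D \<eta>" "a \<in> D"
  shows "hat \<eta> a (c *s X) \<le> cmod c * hat \<eta> a X"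
  unfolding hat_def[of \<eta> a "c *s X"]
proof (rule cSup_least[OF hat_ne[OF assms]], clarify)
  fix p assume p: "cseminorm p" "\<forall>Y. p Y \<le> \<eta> a Y"
  have "p (c *s X) = cmod c * p X" by (rule csn_smult[OF p(1)])
  also have "\<dots> \<le> cmod c * hat \<eta> a X" using hat_upper[of p \<eta> a, OF p] by (simp add: mult_left_mono)
  finally show "p (c *s X) \<le> cmod c * hat \<eta> a X" .
qed

lemma hat_csn: assumes "pseudometric_on D \<eta>" "a \<in> D"
  shows "cseminorm (hat \<eta> a)"
  unfolding cseminorm_def
proof (intro conjI allI)
  fix X Y
  show "hat \<eta> a (X + Y) \<le> hat \<eta> a X + hat \<eta> a Y"
    unfolding hat_def[of \<eta> a "X + Y"]
  proof (rule cSup_least[OF hat_ne[OF assms]], clarify)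
    fix p assume p: "cseminorm p" "\<forall>Y. p Y \<le> \<eta> a Y"
    show "p (X + Y) \<le> hat \<eta> a X + hat \<eta> a Y"
      using csn_tri[OF p(1), of X Y] hat_upper[of p \<eta> a, OF p, of X] hat_upper[of p \<eta> a, OF p, of Y] by simp
  qed
next
  fix X and c :: complex
  show "hat \<eta> a (c *s X) = cmod c * hat \<eta> a X"
  proof (cases "c = 0")
    case True
    then show ?thesis using hat_smult_le[OF assms, of c X] hat_nonneg[OF assms, of "c *s X"] by simp
  next
    case False
    have "hat \<eta> a X = hat \<eta> a (inverse c *s (c *s X))" using False by (simp add: vector_smult_assoc)
    also have "\<dots> \<le> cmod (inverse c) * hat \<eta> a (c *s X)" by (rule hat_smult_le[OF assms])
    finally have "cmod c * hat \<eta> a X \<le> cmod c * (cmod (inverse c) * hat \<eta> a (c *s X))"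
      by (simp add: mult_left_mono)
    also have "\<dots> = hat \<eta> a (c *s X)" using False by (simp add: norm_inverse)
    finally have "cmod c * hat \<eta> a X \<le> hat \<eta> a (c *s X)" .
    then show ?thesis using hat_smult_le[OF assms, of c X] by simp
  qed
qed

lemma Fset_iff: assumes "pseudometric_on D \<eta>" "a \<in> D"
  shows "s \<in> Fset \<eta> a \<longleftrightarrow> psd_herm_form s \<and> (\<forall>Z. Re (s Z Z) \<le> (hat \<eta> a Z)\<^sup>2)"
proof
  assume s: "s \<in> Fset \<eta> a"
  then have ps: "psd_herm_form s" and le: "\<forall>X. sqrt (Re (s X X)) \<le> \<eta> a X" by (auto simp: Fset_def)
  have "\<forall>Z. Re (s Z Z) \<le> (hat \<eta> a Z)\<^sup>2"
  proof
    fix Z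
    have h: "sqrt (Re (s Z Z)) \<le> hat \<eta> a Z"
      using hat_upper[of "\<lambda>Z. sqrt (Re (s Z Z))" \<eta> a, OF psd_seminorm[OF ps] le] by blast
    have "Re (s Z Z) = (sqrt (Re (s Z Z)))\<^sup>2" using psd_Re[OF ps] by simp
    also have "\<dots> \<le> (hat \<eta> a Z)\<^sup>2" by (rule power_mono[OF h]) (simp add: psd_Re[OF ps])
    finally show "Re (s Z Z) \<le> (hat \<eta> a Z)\<^sup>2" .
  qed
  with ps show "psd_herm_form s \<and> (\<forall>Z. Re (s Z Z) \<le> (hat \<eta> a Z)\<^sup>2)" by blast
next
  assume r: "psd_herm_form s \<and> (\<forall>Z. Re (s Z Z) \<le> (hat \<eta> a Z)\<^sup>2)"
  have "\<forall>X. sqrt (Re (s X X)) \<le> \<eta> a X"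
  proof
    fix X
    have "sqrt (Re (s X X)) \<le> sqrt ((hat \<eta> a X)\<^sup>2)" using r real_sqrt_le_mono by blast
    also have "\<dots> = hat \<eta> a X" using hat_nonneg[OF assms] by simp
    also have "\<dots> \<le> \<eta> a X" by (rule hat_le[OF assms])
    finally show "sqrt (Re (s X X)) \<le> \<eta> a X" .
  qed
  with r show "s \<in> Fset \<eta> a" by (simp add: Fset_def)
qed

section \<open>classification\<close>

lemma csn_cases:
  assumes N: "cseminorm N"
  shows "(\<forall>Z. N Z = 0) \<or>
    (\<exists>v. v \<noteq> 0 \<and> N v = 0 \<and> (\<forall>w. N w = 0 \<longrightarrow> (\<exists>t. w = t *s v)) \<and> (\<exists>Z. N Z \<noteq> 0)) \<or>
    (\<forall>Z. N Z = 0 \<longrightarrow> Z = 0)"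
proof (cases "\<exists>v. v \<noteq> 0 \<and> N v = 0")
  case False then show ?thesis by blast
next
  case True
  then obtain v where v: "v \<noteq> 0" "N v = 0" by blast
  show ?thesis
  proof (cases "\<exists>w. N w = 0 \<and> det2 v w \<noteq> 0")
    case True
    then obtain w where w: "N w = 0" "det2 v w \<noteq> 0" by blast
    have "\<forall>Z. N Z = 0"
    proof
      fix Z
      have "N Z = N ((det2 Z w / det2 v w) *s v + (det2 v Z / det2 v w) *s w)"
        using span2[OF w(2), of Z] by simp
      also have "\<dots> \<le> 0" using csn_lin2[OF N] v w by (metis add_0 mult_zero_right)
      finally show "N Z = 0" using csn_nonneg[OF N, of Z] by simp
    qed
    then show ?thesis by blast
  next
    case False
    then have "\<forall>w. N w = 0 \<longrightarrow> (\<exists>t. w = t *s v)" using det2_zero_mult[OF _ v(1)] by blast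
    then show ?thesis using v by blast
  qed
qed

lemma sum_delta_smult: "j < (m::nat) \<Longrightarrow> (\<Sum>k<m. (if k = j then c else 0) *s (e k :: c2)) = c *s e j"
proof -
  assume j: "j < m"
  have "(\<Sum>k<m. (if k = j then c else 0) *s e k) = (\<Sum>k<m. (if k = j then c *s e j else 0))"
    by (rule sum.cong) auto
  also have "\<dots> = c *s e j" using j by simp
  finally show ?thesis .
qed

lemma sum_two_smult: "i \<noteq> j \<Longrightarrow> i < (m::nat) \<Longrightarrow> j < m \<Longrightarrow>
   (\<Sum>k<m. (if k = i then a else if k = j then b else 0) *s (e k :: c2)) = a *s e i + b *s e j"
proof -
  assume ij: "i \<noteq> j" "i < m" "j < m"
  have "(\<Sum>k<m. (if k = i then a else if k = j then b else 0) *s e k) =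
        (\<Sum>k<m. (if k = i then a *s e i else 0) + (if k = j then b *s e j else 0))"
    by (rule sum.cong) (use ij in auto)
  also have "\<dots> = a *s e i + b *s e j" using ij by (simp add: sum.distrib)
  finally show ?thesis .
qed

lemma cb_indep: "cbasis U m e \<Longrightarrow> (\<Sum>j<m. c j *s e j) = 0 \<Longrightarrow> j < m \<Longrightarrow> c j = 0"
  unfolding cbasis_def by blast

lemma cb_U: "cbasis U m e \<Longrightarrow> U = {(\<Sum>j<m. c j *s e j) | c. True}"
  unfolding cbasis_def by blast

lemma cb_mem: assumes "cbasis U m e" "j < m" shows "e j \<in> U"
proof -
  have "(\<Sum>k<m. (if k = j then 1 else 0) *s e k) = e j"
    using sum_delta_smult[OF assms(2), of 1 e] by (simp add: vec_one_smult)
  then show ?thesis unfolding cb_U[OF assms(1)]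
    by (simp only: mem_Collect_eq) (rule exI[where x="\<lambda>k. if k = j then 1 else 0"], simp)
qed

lemma cb_nz: assumes "cbasis U m e" "j < m" shows "e j \<noteq> 0"
proof
  assume "e j = 0"
  then have "(\<Sum>k<m. (if k = j then 1 else 0) *s e k) = 0"
    using sum_delta_smult[OF assms(2), of 1 e] by simp
  from cb_indep[OF assms(1) this assms(2)] show False by simp
qed

lemma cb_det: assumes cb: "cbasis U m e" and ij: "i \<noteq> j" "i < m" "j < m"
  shows "det2 (e i) (e j) \<noteq> 0"
proof
  assume d: "det2 (e i) (e j) = 0"
  have nz: "e j \<noteq> 0" by (rule cb_nz[OF cb ij(3)])
  show False
  proof (cases "e j $ 1 = 0")
    case False
    let ?c = "\<lambda>k. if k = i then e j $ 1 else if k = j then - (e i $ 1) else 0"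
    have "(\<Sum>k<m. ?c k *s e k) = e j $ 1 *s e i + (- (e i $ 1)) *s e j"
      by (rule sum_two_smult[OF ij])
    also have "\<dots> = 0" using d by (simp add: vec_eq_iff forall_2 det2_def algebra_simps)
    finally have "?c i = 0" by (rule cb_indep[OF cb _ ij(2)])
    with False show False by simp
  next
    case True
    then have t: "e j $ 2 \<noteq> 0" using nz by (auto simp: vec_eq_iff forall_2)
    let ?c = "\<lambda>k. if k = i then e j $ 2 else if k = j then - (e i $ 2) else 0"
    have "(\<Sum>k<m. ?c k *s e k) = e j $ 2 *s e i + (- (e i $ 2)) *s e j"
      by (rule sum_two_smult[OF ij])
    also have "\<dots> = 0" using d True by (simp add: vec_eq_iff forall_2 det2_def algebra_simps)
    finally have "?c i = 0" by (rule cb_indep[OF cb _ ij(2)])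
    with t show False by simp
  qed
qed

lemma three_dep: "det2 u1 u2 *s u0 + det2 u2 u0 *s u1 + det2 u0 u1 *s (u2::c2) = 0"
  by (simp add: vec_eq_iff forall_2 det2_def algebra_simps)

lemma cb_le2: assumes cb: "cbasis U m e" shows "m \<le> 2"
proof (rule ccontr)
  assume "\<not> m \<le> 2"
  then have m: "3 \<le> m" by simp
  let ?c = "\<lambda>k::nat. if k = 0 then det2 (e 1) (e 2) else if k = 1 then det2 (e 2) (e 0)
                else if k = 2 then det2 (e 0) (e 1) else 0"
  have "(\<Sum>k<m. ?c k *s e k) = (\<Sum>k\<in>{0,1,2}. ?c k *s e k)"
    by (rule sum.mono_neutral_right) (use m in auto)
  also have "\<dots> = 0" using three_dep[of "e 0" "e 1" "e 2"] by (simp add: algebra_simps)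
  finally have "?c 2 = 0" by (rule cb_indep[OF cb _]) (use m in simp)
  then have "det2 (e 0) (e 1) = 0" by simp
  moreover have "det2 (e 0) (e 1) \<noteq> 0" by (rule cb_det[OF cb]) (use m in auto)
  ultimately show False by simp
qed

lemma sum_lt1: "(\<Sum>j<(1::nat). f j) = f 0" by simp
lemma sum_lt2: "(\<Sum>j<(2::nat). f j) = f 0 + f 1" by (simp add: numeral_2_eq_2)



lemma gram_det1: "gram_det s 1 e = s (e 0) (e 0)"
proof -
  have "{p. p permutes {..<1::nat}} = {id}" by (simp add: lessThan_Suc)
  then show ?thesis by (simp add: gram_det_def)
qed

lemma gram_det2: "gram_det s 2 e = s (e 0) (e 0) * s (e 1) (e 1) - s (e 0) (e 1) * s (e 1) (e 0)"
proof -
  have l: "{..<2::nat} = {0,1}" by auto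
  have "{p. p permutes {..<2::nat}} = {id, Transposition.transpose 0 1}"
    unfolding l by (auto simp: permutes_doubleton_iff)
  moreover have t0: "Transposition.transpose (0::nat) 1 0 = 1" and t1: "Transposition.transpose (0::nat) 1 1 = 0"
    by (simp_all add: transpose_def)
  moreover have ne: "id \<noteq> Transposition.transpose (0::nat) 1" using t0 by (metis id_apply zero_neq_one)
  ultimately show ?thesis
    by (simp add: gram_det_def sign_swap_id numeral_2_eq_2 lessThan_Suc algebra_simps)
qed

lemma herm_self: "herm Y Y = complex_of_real ((cmod (Y$1))\<^sup>2 + (cmod (Y$2))\<^sup>2)"
  by (simp add: herm_def sum_2 complex_mult_cnj cmod_power2)

lemma herm_self_zero: "herm Y Y = 0 \<Longrightarrow> Y = 0"
proof -
  assume "herm Y Y = 0"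
  then have "(cmod (Y$1))\<^sup>2 + (cmod (Y$2))\<^sup>2 = 0" unfolding herm_self by (simp only: of_real_eq_0_iff)
  then have "cmod (Y$1) = 0" "cmod (Y$2) = 0" by (auto simp: add_nonneg_eq_0_iff)
  then show "Y = 0" by (simp add: vec_eq_iff forall_2)
qed

lemma herm_lin1: "herm (a *s u + b *s w) X = a * herm u X + b * herm w X"
  by (simp add: herm_def sum_2 algebra_simps)
lemma herm_lin2: "herm X (a *s u) = cnj a * herm X u"
  by (simp add: herm_def sum_2 algebra_simps)
lemma herm_zero2: "herm X 0 = 0"
  by (simp add: herm_def)

lemma Ubasis_spec: assumes "\<exists>m e. cbasis (Uset \<eta> a) m e"
  shows "cbasis (Uset \<eta> a) (fst (Ubasis \<eta> a)) (snd (Ubasis \<eta> a))"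
proof -
  from assms have "\<exists>x. case x of (m, e) \<Rightarrow> cbasis (Uset \<eta> a) m e" by auto
  then have "case Ubasis \<eta> a of (m, e) \<Rightarrow> cbasis (Uset \<eta> a) m e"
    unfolding Ubasis_def by (rule someI_ex)
  then show ?thesis by (cases "Ubasis \<eta> a") auto
qed



lemma zero_psd: "psd_herm_form (\<lambda>_ _. 0)"
  by (simp add: psd_herm_form_def)

lemma caseI:
  assumes pm: "pseudometric_on D \<eta>" and aD: "a \<in> D" and z: "\<forall>Z. hat \<eta> a Z = 0"
  shows "Fset \<eta> a = {\<lambda>_ _. 0}"
proof -
  have "s \<in> Fset \<eta> a \<longleftrightarrow> s = (\<lambda>_ _. 0)" for s
  proof
    assume s: "s \<in> Fset \<eta> a"
    then have ps: "psd_herm_form s" and le: "\<forall>Z. Re (s Z Z) \<le> 0"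
      using Fset_iff[OF pm aD] z by auto
    have "\<forall>Z. Re (s Z Z) = 0" using le psd_Re[OF ps] by (metis order_antisym)
    then show "s = (\<lambda>_ _. 0)" using psd_vanish(1)[OF ps] by (auto simp: fun_eq_iff)
  next
    assume "s = (\<lambda>_ _. 0)"
    then show "s \<in> Fset \<eta> a" using Fset_iff[OF pm aD] zero_psd by simp
  qed
  then show ?thesis by blast
qed

lemma caseI_unique:
  assumes pm: "pseudometric_on D \<eta>" and aD: "a \<in> D" and z: "\<forall>Z. hat \<eta> a Z = 0"
  shows "\<exists>!s. s \<in> Fset \<eta> a \<and> (\<forall>t\<in>Fset \<eta> a. Fle \<eta> a t s)"
  unfolding caseI[OF assms]
proof (rule ex1I[of _ "\<lambda>_ _. 0"])
  show "(\<lambda>_ _. 0) \<in> {\<lambda>_ _. 0} \<and> (\<forall>t\<in>{\<lambda>_ _. 0}. Fle \<eta> a t (\<lambda>_ _. 0))"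
    by (simp add: Fle_def split: prod.split)
qed simp

lemma det2_add2: "det2 v (X + Y) = det2 v X + det2 v Y"
  and det2_smult2: "det2 v (c *s X) = c * det2 v X"
  by (simp_all add: det2_def algebra_simps)

lemma csn_sum_kernel: assumes N: "cseminorm N" and v: "N v = 0"
  shows "N (x *s v + y *s u) = cmod y * N u"
proof -
  have "N (x *s v + y *s u) \<le> cmod x * N v + cmod y * N u" by (rule csn_lin2[OF N])
  moreover have "N (y *s u) \<le> N (x *s v + y *s u) + N (x *s v)"
    using csn_diff2[OF N, of "x *s v + y *s u" "x *s v"] by simp
  ultimately show ?thesis using v csn_smult[OF N] by (simp add: add_increasing)
qed

lemma caseII:
  assumes pm: "pseudometric_on D \<eta>" and aD: "a \<in> D"
    and v: "v \<noteq> 0" "hat \<eta> a v = 0" "\<forall>w. hat \<eta> a w = 0 \<longrightarrow> (\<exists>t. w = t *s v)"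
    and nz: "\<exists>Z. hat \<eta> a Z \<noteq> 0"
  shows "\<exists>!s. s \<in> Fset \<eta> a \<and> (\<forall>t\<in>Fset \<eta> a. Fle \<eta> a t s)"
    and "s \<in> Fset \<eta> a \<Longrightarrow> s' \<in> Fset \<eta> a \<Longrightarrow> (\<forall>t\<in>Fset \<eta> a. Fle \<eta> a t s') \<Longrightarrow>
         Re (s X X) \<le> Re (s' X X)"
proof -
  let ?N = "hat \<eta> a"
  have N: "cseminorm ?N" by (rule hat_csn[OF pm aD])
  have Uchar: "Y \<in> Uset \<eta> a \<longleftrightarrow> herm Y v = 0" for Y
  proof
    assume "Y \<in> Uset \<eta> a" then show "herm Y v = 0" using v by (simp add: Uset_def Vset_def)
  next
    assume h: "herm Y v = 0"
    show "Y \<in> Uset \<eta> a" unfolding Uset_def Vset_def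
    proof (clarify)
      fix X assume "?N X = 0"
      then obtain t where "X = t *s v" using v by blast
      then show "herm Y X = 0" using h by (simp add: herm_lin2)
    qed
  qed
  define w0 :: c2 where "w0 = (\<chi> i. if i = 1 then cnj (v$2) else - cnj (v$1))"
  have w0v: "w0$1 = cnj (v$2)" "w0$2 = - cnj (v$1)" by (simp_all add: w0_def)
  have w0U: "herm w0 v = 0" by (simp add: herm_def sum_2 w0v)
  have w0nz: "w0 \<noteq> 0" using v(1) by (auto simp: vec_eq_iff forall_2 w0v)
  have Usub: "herm Y v = 0 \<Longrightarrow> \<exists>t. Y = t *s w0" for Y
  proof -
    assume "herm Y v = 0"
    then have "det2 w0 Y = 0" by (simp add: herm_def sum_2 det2_def w0v algebra_simps)
    then show ?thesis using det2_zero_mult[OF _ w0nz] by blast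
  qed
  have cb1: "cbasis (Uset \<eta> a) 1 (\<lambda>_. w0)"
    unfolding cbasis_def
  proof (intro conjI allI impI)
    fix c :: "nat \<Rightarrow> complex" and j :: nat
    assume "(\<Sum>j<1. c j *s w0) = 0" "j < 1"
    then show "c j = 0" using w0nz by simp
  next
    show "Uset \<eta> a = {\<Sum>j<(1::nat). c j *s w0 |c. True}"
    proof (intro set_eqI iffI)
      fix Y assume "Y \<in> Uset \<eta> a"
      then obtain t where Y: "Y = t *s w0" using Uchar Usub by blast
      then show "Y \<in> {\<Sum>j<(1::nat). c j *s w0 |c. True}"
        by (simp only: mem_Collect_eq) (rule exI[where x="\<lambda>_. t"], simp only: sum_lt1)
    next
      fix Y assume "Y \<in> {\<Sum>j<(1::nat). c j *s w0 |c. True}"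
      then obtain c :: "nat \<Rightarrow> complex" where "Y = (\<Sum>j<(1::nat). c j *s w0)" by blast
      then have "Y = c 0 *s w0" by (simp only: sum_lt1)
      then show "Y \<in> Uset \<eta> a" using Uchar w0U by (simp add: herm_lin1[of _ _ 0 w0, simplified])
    qed
  qed
  obtain m e where Ub: "Ubasis \<eta> a = (m, e)" by (cases "Ubasis \<eta> a") auto
  have cb: "cbasis (Uset \<eta> a) m e" using Ubasis_spec[of \<eta> a] cb1 Ub by auto
  have m1: "m = 1"
  proof -
    have "m \<le> 2" by (rule cb_le2[OF cb])
    moreover have "m \<noteq> 0"
    proof
      assume "m = 0"
      then have "Uset \<eta> a = {0}" using cb_U[OF cb] by simp
      then show False using Uchar w0U w0nz by blast
    qed
    moreover have "m \<noteq> 2"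
    proof
      assume m2: "m = 2"
      have d: "det2 (e 0) (e 1) \<noteq> 0" by (rule cb_det[OF cb]) (use m2 in auto)
      have h0: "herm (e 0) v = 0" and h1: "herm (e 1) v = 0"
        using cb_mem[OF cb] Uchar m2 by auto
      have "v = (det2 v (e 1) / det2 (e 0) (e 1)) *s e 0 + (det2 (e 0) v / det2 (e 0) (e 1)) *s e 1"
        by (rule span2[OF d])
      then have "herm v v = 0" using h0 h1 herm_lin1 by (metis add.right_neutral mult_zero_right)
      then show False using herm_self_zero v(1) by blast
    qed
    ultimately show ?thesis by linarith
  qed
  define u where "u = e 0"
  have uU: "herm u v = 0" using cb_mem[OF cb] Uchar m1 u_def by auto
  have unz: "u \<noteq> 0" using cb_nz[OF cb] m1 u_def by auto
  have du: "det2 v u \<noteq> 0"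
  proof
    assume "det2 v u = 0"
    then obtain t where t: "u = t *s v" using det2_zero_mult[OF _ v(1)] by blast
    then have "t * herm v v = 0" using uU herm_lin1[of t v 0 v v] by simp
    moreover have "herm v v \<noteq> 0" using herm_self_zero v(1) by blast
    ultimately have "t = 0" by simp
    then show False using t unz by simp
  qed
  have FleU: "Fle \<eta> a t s \<longleftrightarrow> Re (t u u) \<le> Re (s u u)" for t s
    unfolding Fle_def Ub prod.case m1 gram_det1 u_def by (rule refl)
  define \<beta> where "\<beta> Z = det2 v Z / det2 v u" for Z
  define \<alpha> where "\<alpha> Z = det2 Z u / det2 v u" for Z
  have dec: "Z = \<alpha> Z *s v + \<beta> Z *s u" for Z
    unfolding \<alpha>_def \<beta>_def by (rule span2[OF du])
  have \<beta>u: "\<beta> u = 1" using du by (simp add: \<beta>_def)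
  have \<beta>add: "\<beta> (X + Y) = \<beta> X + \<beta> Y" for X Y by (simp add: \<beta>_def det2_add2 add_divide_distrib)
  have \<beta>mult: "\<beta> (c *s X) = c * \<beta> X" for c X by (simp add: \<beta>_def det2_smult2)
  have rep: "s Z W = \<beta> Z * cnj (\<beta> W) * s u u" if ps: "psd_herm_form s" and sv: "Re (s v v) = 0" for s Z W
  proof -
    have "s Z W = s (\<alpha> Z *s v + \<beta> Z *s u) (\<alpha> W *s v + \<beta> W *s u)" using dec by metis
    also have "\<dots> = \<beta> Z * cnj (\<beta> W) * s u u"
      unfolding psd_expand2[OF ps] using psd_vanish[OF ps sv] by simp
    finally show ?thesis .
  qed
  have NZ: "?N Z = cmod (\<beta> Z) * ?N u" for Z
    using csn_sum_kernel[OF N v(2), of "\<alpha> Z" "\<beta> Z" u] dec[of Z] by simp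
  have Fv: "Re (s v v) = 0" if "s \<in> Fset \<eta> a" for s
  proof -
    have "psd_herm_form s" "Re (s v v) \<le> (?N v)\<^sup>2" using that Fset_iff[OF pm aD] by auto
    then show ?thesis using v(2) psd_Re by (metis order_antisym power2_eq_square mult_zero_left)
  qed
  define s0 where "s0 Z W = \<beta> Z * cnj (\<beta> W) * complex_of_real ((?N u)\<^sup>2)" for Z W
  have s0ZZ: "s0 Z Z = complex_of_real ((?N Z)\<^sup>2)" for Z
  proof -
    have "s0 Z Z = complex_of_real ((cmod (\<beta> Z))\<^sup>2 * (?N u)\<^sup>2)"
      by (simp add: s0_def complex_mult_cnj cmod_power2)
    also have "(cmod (\<beta> Z))\<^sup>2 * (?N u)\<^sup>2 = (?N Z)\<^sup>2" unfolding NZ[of Z] by (simp add: power_mult_distrib)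
    finally show ?thesis .
  qed
  have s0psd: "psd_herm_form s0"
    unfolding psd_herm_form_def
  proof (intro conjI allI)
    fix X Y Z show "s0 (X + Y) Z = s0 X Z + s0 Y Z" by (simp add: s0_def \<beta>add algebra_simps)
  next
    fix X Z and c :: complex show "s0 (c *s X) Z = c * s0 X Z" by (simp add: s0_def \<beta>mult)
  next
    fix X Y show "s0 Y X = cnj (s0 X Y)" by (simp add: s0_def)
  next
    fix X show "Im (s0 X X) = 0" by (simp add: s0ZZ)
  next
    fix X show "0 \<le> Re (s0 X X)" by (simp add: s0ZZ)
  qed
  have s0F: "s0 \<in> Fset \<eta> a" using Fset_iff[OF pm aD] s0psd s0ZZ by simp
  have s0uu: "Re (s0 u u) = (?N u)\<^sup>2" using s0ZZ by simp
  have Fu: "Re (t u u) \<le> (?N u)\<^sup>2" if "t \<in> Fset \<eta> a" for t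
    using that Fset_iff[OF pm aD] by auto
  have s0max: "\<forall>t\<in>Fset \<eta> a. Fle \<eta> a t s0" using Fu s0uu FleU by simp
  show "\<exists>!s. s \<in> Fset \<eta> a \<and> (\<forall>t\<in>Fset \<eta> a. Fle \<eta> a t s)"
  proof (rule ex1I[of _ s0])
    show "s0 \<in> Fset \<eta> a \<and> (\<forall>t\<in>Fset \<eta> a. Fle \<eta> a t s0)" using s0F s0max by blast
  next
    fix s assume s: "s \<in> Fset \<eta> a \<and> (\<forall>t\<in>Fset \<eta> a. Fle \<eta> a t s)"
    then have ps: "psd_herm_form s" using Fset_iff[OF pm aD] by auto
    have "Re (s u u) = (?N u)\<^sup>2" using s s0F FleU Fu s0uu by (metis order_antisym)
    then have suu: "s u u = complex_of_real ((?N u)\<^sup>2)" using psd_real[OF ps, of u] by simp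
    show "s = s0"
    proof (intro ext)
      fix Z W show "s Z W = s0 Z W"
        using rep[OF ps Fv[OF conjunct1[OF s]]] suu by (simp add: s0_def)
    qed
  qed
  assume sF: "s \<in> Fset \<eta> a" and s'F: "s' \<in> Fset \<eta> a" and s'max: "\<forall>t\<in>Fset \<eta> a. Fle \<eta> a t s'"
  have ps: "psd_herm_form s" and ps': "psd_herm_form s'" using sF s'F Fset_iff[OF pm aD] by auto
  have le: "Re (s u u) \<le> Re (s' u u)" using s'max sF FleU by blast
  have r: "Re (t X X) = (cmod (\<beta> X))\<^sup>2 * Re (t u u)" if "psd_herm_form t" "Re (t v v) = 0" for t
    using rep[OF that, of X X] by (simp add: complex_mult_cnj cmod_power2)
  show "Re (s X X) \<le> Re (s' X X)"
    unfolding r[OF ps Fv[OF sF]] r[OF ps' Fv[OF s'F]] using le by (simp add: mult_left_mono)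
qed



lemma norm_smult_c2: "norm (c *s (Z::c2)) = cmod c * norm Z"
proof -
  have "norm (c *s Z) = sqrt ((cmod c)\<^sup>2 * ((cmod (Z$1))\<^sup>2 + (cmod (Z$2))\<^sup>2))"
    unfolding norm_c2 by (simp add: norm_mult power_mult_distrib algebra_simps)
  also have "\<dots> = cmod c * norm Z" unfolding norm_c2 by (simp add: real_sqrt_mult)
  finally show ?thesis .
qed

lemma csn_cont:
  assumes N: "cseminorm N"
  shows "continuous_on UNIV N"
proof -
  let ?L = "N de1 + N de2"
  have L0: "0 \<le> ?L" using csn_nonneg[OF N] by (simp add: add_nonneg_nonneg)
  have "?L-lipschitz_on UNIV N"
  proof (rule lipschitz_onI[OF _ L0])
    fix Z W :: c2
    have b: "N D \<le> ?L * norm D" for D :: c2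
    proof -
      have "N D = N ((D$1) *s de1 + (D$2) *s de2)" using c2_decomp[of D] by simp
      also have "\<dots> \<le> cmod (D$1) * N de1 + cmod (D$2) * N de2" by (rule csn_lin2[OF N])
      also have "\<dots> \<le> norm D * N de1 + norm D * N de2"
        using Finite_Cartesian_Product.norm_nth_le[of D 1] Finite_Cartesian_Product.norm_nth_le[of D 2] csn_nonneg[OF N]
        by (intro add_mono mult_right_mono) auto
      finally show ?thesis by (simp add: algebra_simps)
    qed
    have "N Z \<le> N (Z - W) + N W" by (rule csn_diff[OF N])
    moreover have "N W \<le> N (W - Z) + N Z" by (rule csn_diff[OF N])
    moreover have "N (W - Z) = N (Z - W)" using csn_neg[OF N, of "Z - W"] by simp
    ultimately have "\<bar>N Z - N W\<bar> \<le> N (Z - W)" by linarith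
    also have "\<dots> \<le> ?L * norm (Z - W)" by (rule b)
    finally show "dist (N Z) (N W) \<le> ?L * dist Z W" by (simp add: dist_norm)
  qed
  then show ?thesis by (rule lipschitz_on_continuous_on)
qed

lemma norm_de1: "norm de1 = 1" by (simp add: norm_c2 de_vals)

lemma csn_lower:
  assumes N: "cseminorm N" and z: "\<forall>Z. N Z = 0 \<longrightarrow> Z = 0"
  shows "\<exists>c>0. \<forall>Z. c * norm Z \<le> N Z"
proof -
  have "\<exists>Z0\<in>sphere 0 1. \<forall>Z\<in>sphere 0 1. N Z0 \<le> N Z"
    by (rule continuous_attains_inf[OF compact_sphere])
       (use norm_de1 continuous_on_subset[OF csn_cont[OF N]] in auto)
  then obtain Z0 where Z0: "norm Z0 = 1" "\<forall>Z. norm Z = 1 \<longrightarrow> N Z0 \<le> N Z" by auto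
  have "Z0 \<noteq> 0" using Z0 by auto
  then have c: "N Z0 > 0" using z csn_nonneg[OF N, of Z0] by (metis order_neq_le_trans)
  have "\<forall>Z. N Z0 * norm Z \<le> N Z"
  proof
    fix Z :: c2
    show "N Z0 * norm Z \<le> N Z"
    proof (cases "Z = 0")
      case True then show ?thesis using csn_nonneg[OF N] by simp
    next
      case False
      let ?r = "norm Z"
      have r: "?r > 0" using False by simp
      let ?Z' = "complex_of_real (1 / ?r) *s Z"
      have n1: "norm ?Z' = 1" using r by (simp add: norm_smult_c2 norm_divide)
      have "Z = complex_of_real ?r *s ?Z'" using r by (simp add: vector_smult_assoc)
      then have "N Z = ?r * N ?Z'" using csn_smult[OF N, of "complex_of_real ?r" ?Z'] by simp
      moreover have "N Z0 \<le> N ?Z'" using Z0 n1 by blast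
      ultimately show ?thesis using r by (simp add: mult.commute mult_left_mono)
    qed
  qed
  then show ?thesis using c by blast
qed

lemma caseIII_basis:
  assumes pm: "pseudometric_on D \<eta>" and aD: "a \<in> D" and z: "\<forall>Z. hat \<eta> a Z = 0 \<longrightarrow> Z = 0"
  shows "fst (Ubasis \<eta> a) = 2 \<and> det2 (snd (Ubasis \<eta> a) 0) (snd (Ubasis \<eta> a) 1) \<noteq> 0"
proof -
  have U: "Uset \<eta> a = UNIV"
    using z by (auto simp: Uset_def Vset_def herm_zero2)
  let ?e = "\<lambda>j::nat. if j = 0 then de1 else de2"
  have cb2: "cbasis (Uset \<eta> a) 2 ?e"
    unfolding cbasis_def U
  proof (intro conjI allI impI)
    fix c :: "nat \<Rightarrow> complex" and j :: nat
    assume s: "(\<Sum>j<2. c j *s ?e j) = 0" and j: "j < 2"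
    then have "c 0 *s de1 + c 1 *s de2 = 0" by (simp add: sum_lt2)
    then have "c 0 = 0 \<and> c 1 = 0" by (simp add: vec_eq_iff forall_2 de_vals)
    then show "c j = 0" using j by (cases j) (auto simp: numeral_2_eq_2 less_Suc_eq)
  next
    show "UNIV = {\<Sum>j<(2::nat). c j *s ?e j |c. True}"
    proof (intro set_eqI iffI)
      fix Z :: c2
      show "Z \<in> {\<Sum>j<(2::nat). c j *s ?e j |c. True}"
        by (simp only: mem_Collect_eq)
          (rule exI[where x="\<lambda>j. if j = 0 then Z$1 else Z$2"], simp only: sum_lt2, simp add: c2_decomp[symmetric])
    qed simp
  qed
  obtain m e where Ub: "Ubasis \<eta> a = (m, e)" by (cases "Ubasis \<eta> a") auto
  have cb: "cbasis (Uset \<eta> a) m e" using Ubasis_spec[of \<eta> a] cb2 Ub by auto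
  have m2: "m = 2"
  proof -
    have "m \<le> 2" by (rule cb_le2[OF cb])
    moreover have "m \<noteq> 0"
    proof
      assume "m = 0"
      then have "Uset \<eta> a = {0}" using cb_U[OF cb] by simp
      then show False using U by (metis UNIV_I norm_de1 norm_zero singletonD zero_neq_one)
    qed
    moreover have "m \<noteq> 1"
    proof
      assume m1: "m = 1"
      have "\<forall>Z. \<exists>t. Z = t *s e 0"
      proof
        fix Z :: c2
        have "Z \<in> Uset \<eta> a" using U by simp
        then obtain c :: "nat \<Rightarrow> complex" where "Z = (\<Sum>j<(1::nat). c j *s e j)"
          using cb_U[OF cb] m1 by auto
        then show "\<exists>t. Z = t *s e 0" by (simp only: sum_lt1) blast
      qed
      then obtain t1 t2 where tt: "de1 = t1 *s e 0" "de2 = t2 *s e 0" by metis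
      have "det2 (t1 *s e 0) (t2 *s e 0) = 0" by (simp add: det2_def algebra_simps)
      then have "det2 de1 de2 = 0" using tt by simp
      then show False by (simp add: det2_def de_vals)
    qed
    ultimately show ?thesis by linarith
  qed
  have "det2 (e 0) (e 1) \<noteq> 0" by (rule cb_det[OF cb]) (use m2 in auto)
  then show ?thesis using Ub m2 by simp
qed



lemma reallem:
  fixes A1 A2 B1 B2 x1 x2 y1 y2 d :: real
  assumes d: "d > 0" and A: "0 \<le> A1" "0 \<le> A2"
    and h1: "A1*B1 - x1\<^sup>2 - y1\<^sup>2 = d" and h2: "A2*B2 - x2\<^sup>2 - y2\<^sup>2 = d"
    and h3: "((A1+A2)/2)*((B1+B2)/2) - ((x1+x2)/2)\<^sup>2 - ((y1+y2)/2)\<^sup>2 \<le> d"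
  shows "A1 = A2 \<and> B1 = B2 \<and> x1 = x2 \<and> y1 = y2"
proof -
  have p1: "A1 * B1 > 0" using h1 d by (smt (verit) zero_le_power2)
  have p2: "A2 * B2 > 0" using h2 d by (smt (verit) zero_le_power2)
  have A1p: "A1 > 0" using p1 A(1) by (metis less_eq_real_def mult_zero_left not_less_iff_gr_or_eq)
  have A2p: "A2 > 0" using p2 A(2) by (metis less_eq_real_def mult_zero_left not_less_iff_gr_or_eq)
  define Q where "Q = A1*B2 + A2*B1 - 2*x1*x2 - 2*y1*y2 - 2*d"
  have e3: "((A1+A2)/2)*((B1+B2)/2) - ((x1+x2)/2)\<^sup>2 - ((y1+y2)/2)\<^sup>2
      = ((A1*B1 - x1\<^sup>2 - y1\<^sup>2) + (A2*B2 - x2\<^sup>2 - y2\<^sup>2) + Q + 2*d) / 4"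
    by (simp add: Q_def power2_eq_square field_simps)
  have Q: "Q \<le> 0" using h3 unfolding e3 h1 h2 by simp
  have "A1*A2*Q = A1\<^sup>2*(A2*B2) + A2\<^sup>2*(A1*B1) - 2*A1*A2*(x1*x2+y1*y2) - 2*A1*A2*d"
    by (simp add: Q_def power2_eq_square algebra_simps)
  also have "A2*B2 = d + x2\<^sup>2 + y2\<^sup>2" using h2 by simp
  also have "A1*B1 = d + x1\<^sup>2 + y1\<^sup>2" using h1 by simp
  also have "A1\<^sup>2*(d + x2\<^sup>2 + y2\<^sup>2) + A2\<^sup>2*(d + x1\<^sup>2 + y1\<^sup>2) - 2*A1*A2*(x1*x2+y1*y2) - 2*A1*A2*d
      = d*(A1-A2)\<^sup>2 + (A1*x2 - A2*x1)\<^sup>2 + (A1*y2 - A2*y1)\<^sup>2"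
    by (simp add: power2_eq_square algebra_simps)
  finally have iden: "A1*A2*Q = d*(A1-A2)\<^sup>2 + (A1*x2 - A2*x1)\<^sup>2 + (A1*y2 - A2*y1)\<^sup>2" .
  have "A1*A2*Q \<le> 0" using Q A1p A2p by (simp add: mult_nonneg_nonpos)
  then have s: "d*(A1-A2)\<^sup>2 + (A1*x2 - A2*x1)\<^sup>2 + (A1*y2 - A2*y1)\<^sup>2 \<le> 0" using iden by simp
  have n1: "0 \<le> d*(A1-A2)\<^sup>2" using d by simp
  have z1: "d*(A1-A2)\<^sup>2 = 0" and z2: "(A1*x2 - A2*x1)\<^sup>2 = 0" and z3: "(A1*y2 - A2*y1)\<^sup>2 = 0"
    using s n1 zero_le_power2[of "A1*x2 - A2*x1"] zero_le_power2[of "A1*y2 - A2*y1"] by linarith+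
  have AA: "A1 = A2" using z1 d by simp
  have xx: "x1 = x2" using z2 AA A1p by simp
  have yy: "y1 = y2" using z3 AA A1p by simp
  have "A1 * B1 = A1 * B2" using h1 h2 unfolding AA xx yy by linarith
  then have "B1 = B2" using A1p by simp
  then show ?thesis using AA xx yy by simp
qed



lemma mk_lin: "mkform q (X + Y) Z = mkform q X Z + mkform q Y Z"
  "mkform q (c *s X) Z = c * mkform q X Z"
  by (simp_all add: mkform_def algebra_simps)

lemma mk_psd_iff: "psd_herm_form (mkform q) \<longleftrightarrow>
   (\<forall>X Y. mkform q Y X = cnj (mkform q X Y)) \<and> (\<forall>X. Im (mkform q X X) = 0) \<and> (\<forall>X. 0 \<le> Re (mkform q X X))"
  unfolding psd_herm_form_def using mk_lin by blast

lemma mk_cont: "continuous_on UNIV (\<lambda>q. mkform q X Y)"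
  unfolding mkform_def by (intro continuous_intros)

lemma dstd_mk: "dstd (mkform q) = fst q * snd (snd (snd q)) - fst (snd q) * fst (snd (snd q))"
  by (simp add: dstd_def mkform_def de_vals)

lemma dstd_Re: assumes ps: "psd_herm_form s"
  shows "Re (dstd s) = Re (s de1 de1) * Re (s de2 de2) - (Re (s de1 de2))\<^sup>2 - (Im (s de1 de2))\<^sup>2"
proof -
  have "dstd s = complex_of_real (Re (s de1 de1)) * complex_of_real (Re (s de2 de2)) - s de1 de2 * cnj (s de1 de2)"
    unfolding dstd_def using psd_real[OF ps] psd_herm[OF ps, of de2 de1] by metis
  then show ?thesis by (simp add: power2_eq_square)
qed

lemma form_bound:
  assumes ps: "psd_herm_form s" and le: "\<forall>Z. Re (s Z Z) \<le> (N Z)\<^sup>2" and nn: "\<forall>Z. 0 \<le> N Z"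
  shows "cmod (s X Y) \<le> N X * N Y"
proof -
  have "(cmod (s X Y))\<^sup>2 \<le> Re (s X X) * Re (s Y Y)" by (rule psd_cs[OF ps])
  also have "\<dots> \<le> (N X)\<^sup>2 * (N Y)\<^sup>2" using le psd_Re[OF ps] by (intro mult_mono) auto
  also have "\<dots> = (N X * N Y)\<^sup>2" by (simp add: power_mult_distrib)
  finally have h: "(cmod (s X Y))\<^sup>2 \<le> (N X * N Y)\<^sup>2" .
  have "0 \<le> N X * N Y" using nn by (simp add: mult_nonneg_nonneg)
  then show ?thesis by (rule power2_le_imp_le[OF h])
qed

lemma caseIII:
  assumes pm: "pseudometric_on D \<eta>" and aD: "a \<in> D" and z: "\<forall>Z. hat \<eta> a Z = 0 \<longrightarrow> Z = 0"
  shows "\<exists>!s. s \<in> Fset \<eta> a \<and> (\<forall>t\<in>Fset \<eta> a. Fle \<eta> a t s)"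
    and "\<And>t s. psd_herm_form t \<Longrightarrow> psd_herm_form s \<Longrightarrow> Fle \<eta> a t s \<longleftrightarrow> Re (dstd t) \<le> Re (dstd s)"
proof -
  let ?N = "hat \<eta> a"
  have N: "cseminorm ?N" by (rule hat_csn[OF pm aD])
  have Nnn: "\<forall>Z. 0 \<le> ?N Z" using csn_nonneg[OF N] by blast
  obtain m e where Ub: "Ubasis \<eta> a = (m, e)" by (cases "Ubasis \<eta> a") auto
  have m2: "m = 2" and d0: "det2 (e 0) (e 1) \<noteq> 0" using caseIII_basis[OF assms] Ub by auto
  let ?r = "(cmod (det2 (e 0) (e 1)))\<^sup>2"
  have r: "?r > 0" using d0 by simp
  show FleIII: "Fle \<eta> a t s \<longleftrightarrow> Re (dstd t) \<le> Re (dstd s)"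
    if pt: "psd_herm_form t" and ps: "psd_herm_form s" for t s
  proof -
    have g: "Re (gram_det u 2 e) = ?r * Re (dstd u)" if "psd_herm_form u" for u
    proof -
      have "gram_det u 2 e = det2 (e 0) (e 1) * cnj (det2 (e 0) (e 1)) * dstd u"
        unfolding gram_det2 by (rule gram2[OF that])
      also have "\<dots> = complex_of_real ?r * dstd u" by (simp add: complex_mult_cnj cmod_power2)
      finally show ?thesis by simp
    qed
    have "Fle \<eta> a t s \<longleftrightarrow> Re (gram_det t 2 e) \<le> Re (gram_det s 2 e)"
      unfolding Fle_def Ub prod.case m2 by (rule refl)
    also have "\<dots> \<longleftrightarrow> Re (dstd t) \<le> Re (dstd s)" unfolding g[OF pt] g[OF ps] using r by simp
    finally show ?thesis .
  qed
  define K where "K = {q. psd_herm_form (mkform q) \<and> (\<forall>Z. Re (mkform q Z Z) \<le> (?N Z)\<^sup>2)}"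
  have FK: "mkform q \<in> Fset \<eta> a \<longleftrightarrow> q \<in> K" for q
    unfolding K_def Fset_iff[OF pm aD] by simp
  have Kclosed: "closed K"
  proof -
    have "K = {q. \<forall>X Y. mkform q Y X = cnj (mkform q X Y)} \<inter> ({q. \<forall>X. Im (mkform q X X) = 0}
       \<inter> ({q. \<forall>X. 0 \<le> Re (mkform q X X)} \<inter> {q. \<forall>Z. Re (mkform q Z Z) \<le> (?N Z)\<^sup>2}))"
      unfolding K_def mk_psd_iff by auto
    moreover have "closed {q. \<forall>X Y. mkform q Y X = cnj (mkform q X Y)}"
      by (intro closed_Collect_all closed_Collect_eq mk_cont continuous_intros)
    moreover have "closed {q. \<forall>X. Im (mkform q X X) = 0}"
      by (intro closed_Collect_all closed_Collect_eq mk_cont continuous_intros)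
    moreover have "closed {q. \<forall>X. 0 \<le> Re (mkform q X X)}"
      by (intro closed_Collect_all closed_Collect_le mk_cont continuous_intros)
    moreover have "closed {q. \<forall>Z. Re (mkform q Z Z) \<le> (?N Z)\<^sup>2}"
      by (intro closed_Collect_all closed_Collect_le mk_cont continuous_intros)
    ultimately show ?thesis by (simp add: closed_Int)
  qed
  have Kbounded: "bounded K"
  proof -
    let ?B = "?N de1 * ?N de1 + ?N de1 * ?N de2 + ?N de2 * ?N de1 + ?N de2 * ?N de2"
    have "norm q \<le> ?B" if "q \<in> K" for q
    proof -
      have ps: "psd_herm_form (mkform q)" and le: "\<forall>Z. Re (mkform q Z Z) \<le> (?N Z)\<^sup>2"
        using that K_def by auto
      obtain q1 q2 q3 q4 where q: "q = (q1, q2, q3, q4)" by (cases q) auto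
      have c: "coord (mkform q) = q" by (rule coord_mkform)
      have b: "cmod (mkform q X Y) \<le> ?N X * ?N Y" for X Y by (rule form_bound[OF ps le Nnn])
      have "norm q \<le> cmod q1 + (cmod q2 + (cmod q3 + cmod q4))"
        unfolding q by (meson add_left_mono norm_Pair_le order_trans)
      also have "\<dots> \<le> ?B" using c b[of de1 de1] b[of de1 de2] b[of de2 de1] b[of de2 de2]
        unfolding q coord_def by (simp add: algebra_simps)
      finally show ?thesis .
    qed
    then show ?thesis unfolding bounded_iff by blast
  qed
  have Kne: "(0, 0, 0, 0) \<in> K"
  proof -
    have "mkform (0,0,0,0) = (\<lambda>_ _. 0)" by (simp add: mkform_def fun_eq_iff)
    then show ?thesis unfolding K_def using zero_psd by (simp add: power2_eq_square)
  qed
  have "\<exists>q\<in>K. \<forall>p\<in>K. Re (dstd (mkform p)) \<le> Re (dstd (mkform q))"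
    by (rule continuous_attains_sup) (use Kclosed Kbounded Kne compact_eq_bounded_closed in
      \<open>auto simp: dstd_mk intro!: continuous_intros\<close>)
  then obtain qm where qm: "qm \<in> K" "\<forall>p\<in>K. Re (dstd (mkform p)) \<le> Re (dstd (mkform qm))" by blast
  let ?sm = "mkform qm"
  have smF: "?sm \<in> Fset \<eta> a" using FK qm by simp
  have Fpsd: "psd_herm_form t" if "t \<in> Fset \<eta> a" for t using that Fset_iff[OF pm aD] by auto
  have smmax: "Re (dstd t) \<le> Re (dstd ?sm)" if "t \<in> Fset \<eta> a" for t
  proof -
    have "t = mkform (coord t)" by (rule psd_mkform[OF Fpsd[OF that]])
    then have "coord t \<in> K" using that FK by metis
    then show ?thesis using qm(2) psd_mkform[OF Fpsd[OF that]] by metis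
  qed
  obtain c where c: "c > 0" "\<forall>Z. c * norm Z \<le> ?N Z" using csn_lower[OF N z] by blast
  define s0 where "s0 Z W = complex_of_real (c\<^sup>2) * herm Z W" for Z W
  have hermZZ: "herm Z Z = complex_of_real ((norm Z)\<^sup>2)" for Z
    unfolding herm_self norm_c2 by simp
  have s0psd: "psd_herm_form s0"
    unfolding psd_herm_form_def s0_def
    by (simp add: herm_def sum_2 algebra_simps hermZZ[unfolded herm_def sum_2])
  have s0F: "s0 \<in> Fset \<eta> a"
  proof -
    have "Re (s0 Z Z) \<le> (?N Z)\<^sup>2" for Z
    proof -
      have "Re (s0 Z Z) = (c * norm Z)\<^sup>2" by (simp add: s0_def hermZZ power_mult_distrib)
      also have "\<dots> \<le> (?N Z)\<^sup>2" using c by (intro power_mono) auto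
      finally show ?thesis .
    qed
    then show ?thesis using Fset_iff[OF pm aD] s0psd by simp
  qed
  have s0d: "Re (dstd s0) = c^4"
    by (simp add: dstd_def s0_def herm_def sum_2 de_vals power2_eq_square power4_eq_xxxx)
  have dpos: "Re (dstd ?sm) > 0" using smmax[OF s0F] s0d c by (smt (verit) zero_less_power)
  show "\<exists>!s. s \<in> Fset \<eta> a \<and> (\<forall>t\<in>Fset \<eta> a. Fle \<eta> a t s)"
  proof (rule ex1I[of _ ?sm])
    show "?sm \<in> Fset \<eta> a \<and> (\<forall>t\<in>Fset \<eta> a. Fle \<eta> a t ?sm)"
      using smF smmax FleIII Fpsd by blast
  next
    fix s assume s: "s \<in> Fset \<eta> a \<and> (\<forall>t\<in>Fset \<eta> a. Fle \<eta> a t s)"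
    have sF: "s \<in> Fset \<eta> a" and ps: "psd_herm_form s" using s Fpsd by auto
    have pm': "psd_herm_form ?sm" using Fpsd smF by blast
    have eq: "Re (dstd s) = Re (dstd ?sm)"
      using s smF FleIII[OF pm' ps] smmax[OF sF] by (meson order_antisym)
    define mid where "mid Z W = (s Z W + ?sm Z W) / 2" for Z W
    have midpsd: "psd_herm_form mid"
      unfolding psd_herm_form_def mid_def
    proof (intro conjI allI)
      fix X Y Z show "(s (X + Y) Z + ?sm (X + Y) Z) / 2 = (s X Z + ?sm X Z) / 2 + (s Y Z + ?sm Y Z) / 2"
        using psd_add1[OF ps] psd_add1[OF pm'] by (simp add: add_divide_distrib)
    next
      fix X Z and k :: complex show "(s (k *s X) Z + ?sm (k *s X) Z) / 2 = k * ((s X Z + ?sm X Z) / 2)"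
        using psd_mult1[OF ps] psd_mult1[OF pm'] by (simp add: algebra_simps)
    next
      fix X Y show "(s Y X + ?sm Y X) / 2 = cnj ((s X Y + ?sm X Y) / 2)"
        using psd_herm[OF ps, of Y X] psd_herm[OF pm', of Y X] by simp
    next
      fix X show "Im ((s X X + ?sm X X) / 2) = 0" using psd_Im[OF ps] psd_Im[OF pm'] by simp
    next
      fix X show "0 \<le> Re ((s X X + ?sm X X) / 2)" using psd_Re[OF ps] psd_Re[OF pm'] by simp
    qed
    have midF: "mid \<in> Fset \<eta> a"
    proof -
      have "Re (mid Z Z) \<le> (?N Z)\<^sup>2" for Z
      proof -
        have "Re (s Z Z) \<le> (?N Z)\<^sup>2" "Re (?sm Z Z) \<le> (?N Z)\<^sup>2" using sF smF Fset_iff[OF pm aD] by auto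
        then show ?thesis by (simp add: mid_def)
      qed
      then show ?thesis using Fset_iff[OF pm aD] midpsd by simp
    qed
    have midle: "Re (dstd mid) \<le> Re (dstd ?sm)" by (rule smmax[OF midF])
    let ?A1 = "Re (s de1 de1)" and ?B1 = "Re (s de2 de2)" and ?x1 = "Re (s de1 de2)" and ?y1 = "Im (s de1 de2)"
    let ?A2 = "Re (?sm de1 de1)" and ?B2 = "Re (?sm de2 de2)" and ?x2 = "Re (?sm de1 de2)" and ?y2 = "Im (?sm de1 de2)"
    have R: "?A1 = ?A2 \<and> ?B1 = ?B2 \<and> ?x1 = ?x2 \<and> ?y1 = ?y2"
    proof (rule reallem[OF dpos])
      show "0 \<le> ?A1" "0 \<le> ?A2" using psd_Re[OF ps] psd_Re[OF pm'] by auto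
      show "?A1 * ?B1 - ?x1\<^sup>2 - ?y1\<^sup>2 = Re (dstd ?sm)" using dstd_Re[OF ps] eq by simp
      show "?A2 * ?B2 - ?x2\<^sup>2 - ?y2\<^sup>2 = Re (dstd ?sm)" using dstd_Re[OF pm'] by simp
      show "((?A1 + ?A2)/2) * ((?B1 + ?B2)/2) - ((?x1 + ?x2)/2)\<^sup>2 - ((?y1 + ?y2)/2)\<^sup>2 \<le> Re (dstd ?sm)"
        using midle dstd_Re[OF midpsd] by (simp add: mid_def)
    qed
    have "coord s = coord ?sm"
    proof -
      have "s de1 de1 = ?sm de1 de1" using R psd_real[OF ps, of de1] psd_real[OF pm', of de1] by simp
      moreover have "s de2 de2 = ?sm de2 de2" using R psd_real[OF ps, of de2] psd_real[OF pm', of de2] by simp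
      moreover have "s de1 de2 = ?sm de1 de2" using R by (simp add: complex_eq_iff)
      moreover have "s de2 de1 = ?sm de2 de1"
        using psd_herm[OF ps, of de2 de1] psd_herm[OF pm', of de2 de1] \<open>s de1 de2 = ?sm de1 de2\<close> by simp
      ultimately show ?thesis by (simp add: coord_def)
    qed
    then show "s = ?sm" using psd_mkform[OF ps] psd_mkform[OF pm'] by metis
  qed
qed



lemma smax_ex1:
  assumes pm: "pseudometric_on D \<eta>" and aD: "a \<in> D"
  shows "\<exists>!s. s \<in> Fset \<eta> a \<and> (\<forall>t\<in>Fset \<eta> a. Fle \<eta> a t s)"
  using csn_cases[OF hat_csn[OF pm aD]] caseI_unique[OF pm aD] caseII(1)[OF pm aD] caseIII(1)[OF pm aD]
  by blast

lemma smax_spec: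
  assumes pm: "pseudometric_on D \<eta>" and aD: "a \<in> D"
  shows "smax \<eta> a \<in> Fset \<eta> a" "\<forall>t\<in>Fset \<eta> a. Fle \<eta> a t (smax \<eta> a)"
proof -
  have "smax \<eta> a \<in> Fset \<eta> a \<and> (\<forall>t\<in>Fset \<eta> a. Fle \<eta> a t (smax \<eta> a))"
    unfolding smax_def by (rule theI'[OF smax_ex1[OF assms]])
  then show "smax \<eta> a \<in> Fset \<eta> a" "\<forall>t\<in>Fset \<eta> a. Fle \<eta> a t (smax \<eta> a)" by auto
qed

lemma smax_unique:
  assumes pm: "pseudometric_on D \<eta>" and aD: "a \<in> D"
    and "s \<in> Fset \<eta> a" "\<forall>t\<in>Fset \<eta> a. Fle \<eta> a t s"
  shows "s = smax \<eta> a"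
  using smax_ex1[OF pm aD] smax_spec[OF pm aD] assms(3,4) by blast

lemma Fset_le: "s \<in> Fset \<eta> a \<Longrightarrow> Re (s Z Z) \<le> (\<eta> a Z)\<^sup>2"
proof -
  assume s: "s \<in> Fset \<eta> a"
  then have ps: "psd_herm_form s" and le: "sqrt (Re (s Z Z)) \<le> \<eta> a Z" by (auto simp: Fset_def)
  have "Re (s Z Z) = (sqrt (Re (s Z Z)))\<^sup>2" using psd_Re[OF ps] by simp
  also have "\<dots> \<le> (\<eta> a Z)\<^sup>2" by (rule power_mono[OF le]) (simp add: psd_Re[OF ps])
  finally show ?thesis .
qed

lemma Fset_intro:
  assumes "psd_herm_form s" "\<forall>Z. Re (s Z Z) \<le> (\<eta> a Z)\<^sup>2" "\<forall>Z. 0 \<le> \<eta> a Z"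
  shows "s \<in> Fset \<eta> a"
proof -
  have "sqrt (Re (s Z Z)) \<le> \<eta> a Z" for Z
  proof -
    have "sqrt (Re (s Z Z)) \<le> sqrt ((\<eta> a Z)\<^sup>2)" using assms(2) real_sqrt_le_mono by blast
    then show ?thesis using assms(3) by simp
  qed
  then show ?thesis using assms(1) by (simp add: Fset_def)
qed

lemma psd_scale: assumes ps: "psd_herm_form s" and k: "0 \<le> k"
  shows "psd_herm_form (\<lambda>Z W. complex_of_real k * s Z W)"
  unfolding psd_herm_form_def
proof (intro conjI allI)
  fix X Y Z show "complex_of_real k * s (X + Y) Z = complex_of_real k * s X Z + complex_of_real k * s Y Z"
    by (simp add: psd_add1[OF ps] algebra_simps)
next
  fix X Z and c :: complex show "complex_of_real k * s (c *s X) Z = c * (complex_of_real k * s X Z)"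
    by (simp add: psd_mult1[OF ps])
next
  fix X Y show "complex_of_real k * s Y X = cnj (complex_of_real k * s X Y)"
    by (simp add: psd_herm[OF ps, of Y X])
next
  fix X show "Im (complex_of_real k * s X X) = 0" by (simp add: psd_Im[OF ps])
next
  fix X show "0 \<le> Re (complex_of_real k * s X X)" using psd_Re[OF ps] k by simp
qed

lemma unif:
  assumes pm: "pseudometric_on D \<eta>" and oD: "open D" and aD: "a \<in> D"
    and cont: "continuous_on (D \<times> UNIV) (\<lambda>(a, X). \<eta> a X)"
    and c: "c > 0" "\<forall>Z. c * norm Z \<le> \<eta> a Z"
    and bD: "\<forall>k. b k \<in> D" and bl: "b \<longlonglongrightarrow> a" and \<rho>: "0 < \<rho>" "\<rho> < 1"
  shows "eventually (\<lambda>k. \<forall>Z. \<rho> * \<eta> a Z \<le> \<eta> (b k) Z) sequentially"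
proof -
  obtain r where r: "r > 0" "cball a r \<subseteq> D" using oD aD open_contains_cball by blast
  let ?S = "cball a r \<times> sphere (0::c2) 1"
  have "continuous_on ?S (\<lambda>(a, X). \<eta> a X)"
    by (rule continuous_on_subset[OF cont]) (use r in auto)
  then have "uniformly_continuous_on ?S (\<lambda>(a, X). \<eta> a X)"
    by (rule compact_uniformly_continuous) (simp add: compact_Times compact_sphere)
  moreover have "(1 - \<rho>) * c > 0" using \<rho> c by simp
  ultimately obtain d where d: "d > 0"
    "\<forall>x\<in>?S. \<forall>x'\<in>?S. dist x' x < d \<longrightarrow> dist ((\<lambda>(a, X). \<eta> a X) x') ((\<lambda>(a, X). \<eta> a X) x) < (1 - \<rho>) * c"
    unfolding uniformly_continuous_on_def by blast
  have "eventually (\<lambda>k. dist (b k) a < min d r) sequentially"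
  proof -
    have "min d r > 0" using d(1) r(1) by simp
    then show ?thesis using bl by (auto simp: tendsto_iff simp del: min_less_iff_conj)
  qed
  then show ?thesis
  proof (rule eventually_mono)
    fix k assume k: "dist (b k) a < min d r"
    have bk: "b k \<in> cball a r" using k by (simp add: dist_commute)
    have unit: "\<rho> * \<eta> a Z \<le> \<eta> (b k) Z" if Z: "norm Z = 1" for Z
    proof -
      have "dist (b k, Z) (a, Z) < d" using k by (simp add: dist_Pair_Pair)
      then have "dist (\<eta> (b k) Z) (\<eta> a Z) < (1 - \<rho>) * c"
        using d(2) bk Z r(1) by fastforce
      moreover have "c \<le> \<eta> a Z" using c(2) Z by (metis mult.right_neutral)
      ultimately have "\<eta> a Z - \<eta> (b k) Z < (1 - \<rho>) * \<eta> a Z"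
        using \<rho> by (smt (verit, best) dist_real_def mult_left_mono)
      then show ?thesis by (simp add: algebra_simps)
    qed
    show "\<forall>Z. \<rho> * \<eta> a Z \<le> \<eta> (b k) Z"
    proof
      fix Z :: c2
      show "\<rho> * \<eta> a Z \<le> \<eta> (b k) Z"
      proof (cases "Z = 0")
        case True
        have "\<eta> a Z = 0" "\<eta> (b k) Z = 0"
          using pm_smult[OF pm aD, of 0 Z] pm_smult[OF pm bD[rule_format, of k], of 0 Z] True by simp_all
        then show ?thesis by simp
      next
        case False
        let ?n = "norm Z"
        let ?Z' = "complex_of_real (1 / ?n) *s Z"
        have n1: "norm ?Z' = 1" using False by (simp add: norm_smult_c2 norm_divide)
        have Zeq: "Z = complex_of_real ?n *s ?Z'" using False by (simp add: vector_smult_assoc)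
        have "\<eta> a Z = ?n * \<eta> a ?Z'" "\<eta> (b k) Z = ?n * \<eta> (b k) ?Z'"
          using pm_smult[OF pm aD, of "complex_of_real ?n" ?Z'] pm_smult[OF pm bD[rule_format, of k], of "complex_of_real ?n" ?Z'] Zeq
          by (metis norm_ge_zero norm_of_real abs_of_nonneg)+
        then show ?thesis using mult_left_mono[OF unit[OF n1] norm_ge_zero[of Z]] by (simp add: algebra_simps)
      qed
    qed
  qed
qed



lemma mk_tendsto:
  assumes "G \<longlonglongrightarrow> q" "Z \<longlonglongrightarrow> z" "W \<longlonglongrightarrow> w"
  shows "(\<lambda>k. mkform (G k) (Z k) (W k)) \<longlonglongrightarrow> mkform q z w"
  unfolding mkform_def by (intro tendsto_intros assms)

lemma core:
  assumes pm: "pseudometric_on D \<eta>" and oD: "open D"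
    and cont: "continuous_on (D \<times> UNIV) (\<lambda>(a, X). \<eta> a X)"
    and aD: "a \<in> D" and bD: "\<forall>k. b k \<in> D" and bl: "b \<longlonglongrightarrow> a" and Yl: "Y \<longlonglongrightarrow> X"
  shows "\<exists>r L. strict_mono r \<and> (\<lambda>k. Re (smax \<eta> (b (r k)) (Y (r k)) (Y (r k)))) \<longlonglongrightarrow> L
     \<and> L \<le> Re (smax \<eta> a X X)"
proof -
  define S where "S k = smax \<eta> (b k)" for k
  have SF: "S k \<in> Fset \<eta> (b k)" for k unfolding S_def by (rule smax_spec(1)[OF pm bD[rule_format]])
  have Spsd: "psd_herm_form (S k)" for k using SF by (simp add: Fset_def)
  have Sle: "\<forall>Z. Re (S k Z Z) \<le> (\<eta> (b k) Z)\<^sup>2" for k using Fset_le[OF SF] by blast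
  have bnn: "\<forall>Z. 0 \<le> \<eta> (b k) Z" for k using pm_nonneg[OF pm bD[rule_format]] by blast
  have etal: "(\<lambda>k. \<eta> (b k) Z) \<longlonglongrightarrow> \<eta> a Z" for Z
  proof -
    have "(\<lambda>k. (\<lambda>(a, X). \<eta> a X) (b k, Z)) \<longlonglongrightarrow> (\<lambda>(a, X). \<eta> a X) (a, Z)"
      by (rule continuous_on_tendsto_compose[OF cont]) (use bl aD bD in \<open>auto intro!: tendsto_intros\<close>)
    then show ?thesis by simp
  qed
  define g where "g k = coord (S k)" for k
  have Seq: "S k = mkform (g k)" for k unfolding g_def by (rule psd_mkform[OF Spsd])
  obtain K1 where K1: "\<forall>k. norm (\<eta> (b k) de1) \<le> K1"
    using convergent_imp_Bseq[OF convergentI[OF etal[of de1]]] unfolding Bseq_def by blast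
  obtain K2 where K2: "\<forall>k. norm (\<eta> (b k) de2) \<le> K2"
    using convergent_imp_Bseq[OF convergentI[OF etal[of de2]]] unfolding Bseq_def by blast
  have "bounded (range g)"
  proof -
    have "norm (g k) \<le> K1 * K1 + K1 * K2 + K2 * K1 + K2 * K2" for k
    proof -
      have fb: "cmod (S k U V) \<le> \<eta> (b k) U * \<eta> (b k) V" for U V
        by (rule form_bound[OF Spsd Sle bnn])
      have e1: "\<eta> (b k) de1 \<le> K1" "0 \<le> \<eta> (b k) de1" using K1 bnn[of k] by (auto dest: spec[of _ k])
      have e2: "\<eta> (b k) de2 \<le> K2" "0 \<le> \<eta> (b k) de2" using K2 bnn[of k] by (auto dest: spec[of _ k])
      have m: "\<eta> (b k) U * \<eta> (b k) V \<le> KU * KV" if "\<eta> (b k) U \<le> KU" "0 \<le> \<eta> (b k) U"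
        "\<eta> (b k) V \<le> KV" "0 \<le> \<eta> (b k) V" for U V KU KV
        using that by (meson mult_mono order_trans)
      have "norm (g k) \<le> cmod (S k de1 de1) + (cmod (S k de1 de2) + (cmod (S k de2 de1) + cmod (S k de2 de2)))"
        unfolding g_def coord_def by (meson add_left_mono norm_Pair_le order_trans)
      also have "\<dots> \<le> K1 * K1 + (K1 * K2 + (K2 * K1 + K2 * K2))"
        using fb[of de1 de1] fb[of de1 de2] fb[of de2 de1] fb[of de2 de2]
          m[OF e1 e1] m[OF e1 e2] m[OF e2 e1] m[OF e2 e2] by linarith
      finally show ?thesis by (simp add: algebra_simps)
    qed
    then show ?thesis unfolding bounded_iff by blast
  qed
  then obtain q r where r: "strict_mono r" "(g \<circ> r) \<longlonglongrightarrow> q"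
    using bounded_imp_convergent_subsequence by blast
  define s where "s = mkform q"
  have gr: "(\<lambda>k. g (r k)) \<longlonglongrightarrow> q" using r(2) by (simp add: comp_def)
  have conv: "(\<lambda>k. S (r k) (Z k) (W k)) \<longlonglongrightarrow> s z w" if "Z \<longlonglongrightarrow> z" "W \<longlonglongrightarrow> w" for Z W z w
    unfolding Seq s_def by (rule mk_tendsto[OF gr that])
  have convc: "(\<lambda>k. S (r k) U V) \<longlonglongrightarrow> s U V" for U V by (rule conv) auto
  have etar: "(\<lambda>k. \<eta> (b (r k)) Z) \<longlonglongrightarrow> \<eta> a Z" for Z
    using LIMSEQ_subseq_LIMSEQ[OF etal r(1)] by (simp add: comp_def)
  have spsd: "psd_herm_form s"
    unfolding s_def mk_psd_iff
  proof (intro conjI allI)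
    fix U V
    have "(\<lambda>k. cnj (S (r k) U V)) \<longlonglongrightarrow> cnj (s U V)" by (intro tendsto_intros convc)
    moreover have "(\<lambda>k. cnj (S (r k) U V)) = (\<lambda>k. S (r k) V U)"
    proof (rule ext)
      fix k show "cnj (S (r k) U V) = S (r k) V U" using psd_herm[OF Spsd[of "r k"], of V U] by simp
    qed
    ultimately have "(\<lambda>k. S (r k) V U) \<longlonglongrightarrow> cnj (s U V)" by simp
    then show "mkform q V U = cnj (mkform q U V)" using convc[of V U] LIMSEQ_unique s_def by metis
  next
    fix U
    have "(\<lambda>k. Im (S (r k) U U)) \<longlonglongrightarrow> Im (s U U)" by (intro tendsto_intros convc)
    moreover have "(\<lambda>k. Im (S (r k) U U)) = (\<lambda>k. 0)" using psd_Im[OF Spsd] by (auto simp: fun_eq_iff)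
    ultimately show "Im (mkform q U U) = 0" using LIMSEQ_unique s_def by (metis tendsto_const)
  next
    fix U
    have "(\<lambda>k. Re (S (r k) U U)) \<longlonglongrightarrow> Re (s U U)" by (intro tendsto_intros convc)
    then have "0 \<le> Re (s U U)" by (rule LIMSEQ_le_const) (use psd_Re[OF Spsd] in auto)
    then show "0 \<le> Re (mkform q U U)" by (simp add: s_def)
  qed
  have anng: "\<forall>Z. 0 \<le> \<eta> a Z" using pm_nonneg[OF pm aD] by blast
  have sF: "s \<in> Fset \<eta> a"
  proof (rule Fset_intro[of s \<eta> a, OF spsd _ anng], rule allI)
    fix Z
    have l1: "(\<lambda>k. Re (S (r k) Z Z)) \<longlonglongrightarrow> Re (s Z Z)" by (intro tendsto_intros convc)
    have l2: "(\<lambda>k. (\<eta> (b (r k)) Z)\<^sup>2) \<longlonglongrightarrow> (\<eta> a Z)\<^sup>2" by (intro tendsto_intros etar)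
    show "Re (s Z Z) \<le> (\<eta> a Z)\<^sup>2"
      by (rule LIMSEQ_le[OF l1 l2]) (use Sle in auto)
  qed
  define L where "L = Re (s X X)"
  have Lconv: "(\<lambda>k. Re (smax \<eta> (b (r k)) (Y (r k)) (Y (r k)))) \<longlonglongrightarrow> L"
  proof -
    have "(\<lambda>k. Y (r k)) \<longlonglongrightarrow> X" using LIMSEQ_subseq_LIMSEQ[OF Yl r(1)] by (simp add: comp_def)
    then have "(\<lambda>k. Re (S (r k) (Y (r k)) (Y (r k)))) \<longlonglongrightarrow> Re (s X X)" by (intro tendsto_intros conv)
    then show ?thesis by (simp add: S_def L_def)
  qed
  let ?sa = "smax \<eta> a"
  have saF: "?sa \<in> Fset \<eta> a" and samax: "\<forall>t\<in>Fset \<eta> a. Fle \<eta> a t ?sa" using smax_spec[OF pm aD] by auto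
  have sapsd: "psd_herm_form ?sa" using saF by (simp add: Fset_def)
  have "L \<le> Re (?sa X X)"
  proof -
    consider (i) "\<forall>Z. hat \<eta> a Z = 0"
      | (ii) v where "v \<noteq> 0" "hat \<eta> a v = 0" "\<forall>w. hat \<eta> a w = 0 \<longrightarrow> (\<exists>t. w = t *s v)" "\<exists>Z. hat \<eta> a Z \<noteq> 0"
      | (iii) "\<forall>Z. hat \<eta> a Z = 0 \<longrightarrow> Z = 0"
      using csn_cases[OF hat_csn[OF pm aD]] by blast
    then show ?thesis
    proof cases
      case i
      then have "s = (\<lambda>_ _. 0)" using caseI[OF pm aD] sF by blast
      then show ?thesis unfolding L_def using psd_Re[OF sapsd] by simp
    next
      case (ii v)
      show ?thesis unfolding L_def by (rule caseII(2)[OF pm aD ii sF saF samax])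
    next
      case iii
      note FleIII = caseIII(2)[OF pm aD iii]
      obtain c where c: "c > 0" "\<forall>Z. c * norm Z \<le> hat \<eta> a Z"
        using csn_lower[OF hat_csn[OF pm aD] iii] by blast
      have c': "\<forall>Z. c * norm Z \<le> \<eta> a Z" using c hat_le[OF pm aD] by (meson order_trans)
      have br: "(\<lambda>k. b (r k)) \<longlonglongrightarrow> a" using LIMSEQ_subseq_LIMSEQ[OF bl r(1)] by (simp add: comp_def)
      have brD: "\<forall>k. b (r k) \<in> D" using bD by simp
      have dconv: "(\<lambda>k. Re (dstd (S (r k)))) \<longlonglongrightarrow> Re (dstd s)"
        unfolding dstd_def by (intro tendsto_intros convc)
      have key: "Re (dstd ?sa) \<le> Re (dstd s)"
      proof (rule field_le_mult_one_interval)
        fix z :: real assume z: "0 < z" "z < 1"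
        define \<rho> where "\<rho> = sqrt (sqrt z)"
        have \<rho>: "0 < \<rho>" "\<rho> < 1" using z by (simp_all add: \<rho>_def)
        have r2: "\<rho> * \<rho> = sqrt z" using z unfolding \<rho>_def by simp
        have "\<rho>^4 = (\<rho> * \<rho>) * (\<rho> * \<rho>)" by (simp add: power4_eq_xxxx mult.assoc)
        also have "\<dots> = z" unfolding r2 using z by simp
        finally have \<rho>4: "\<rho>^4 = z" .
        have ev: "eventually (\<lambda>k. \<forall>Z. \<rho> * \<eta> a Z \<le> \<eta> (b (r k)) Z) sequentially"
          by (rule unif[OF pm oD aD cont c(1) c' brD br \<rho>])
        have "eventually (\<lambda>k. z * Re (dstd ?sa) \<le> Re (dstd (S (r k)))) sequentially"
        proof (rule eventually_mono[OF ev])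
          fix k assume h: "\<forall>Z. \<rho> * \<eta> a Z \<le> \<eta> (b (r k)) Z"
          let ?b = "b (r k)"
          have bkD: "?b \<in> D" using bD by simp
          have hb: "\<rho> * hat \<eta> a Z \<le> hat \<eta> ?b Z" for Z
          proof (rule hat_upper[of "\<lambda>Z. \<rho> * hat \<eta> a Z" \<eta> ?b])
            show "cseminorm (\<lambda>Z. \<rho> * hat \<eta> a Z)" by (rule csn_scale[OF hat_csn[OF pm aD]]) (use \<rho> in simp)
            show "\<forall>Y. \<rho> * hat \<eta> a Y \<le> \<eta> ?b Y"
              using h hat_le[OF pm aD] \<rho> by (meson less_eq_real_def mult_left_mono order_trans)
          qed
          have iiib: "\<forall>Z. hat \<eta> ?b Z = 0 \<longrightarrow> Z = 0"
          proof (intro allI impI)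
            fix Z assume "hat \<eta> ?b Z = 0"
            then have "\<rho> * hat \<eta> a Z \<le> 0" using hb[of Z] by simp
            then have "hat \<eta> a Z = 0" using \<rho> hat_nonneg[OF pm aD, of Z]
              by (simp add: mult_le_0_iff)
            then show "Z = 0" using iii by blast
          qed
          define t where "t Z W = complex_of_real (\<rho>\<^sup>2) * ?sa Z W" for Z W
          have tpsd: "psd_herm_form t" unfolding t_def by (rule psd_scale[OF sapsd]) simp
          have tF: "t \<in> Fset \<eta> ?b"
          proof (rule Fset_intro[of t \<eta> ?b, OF tpsd _ bnn[of "r k"]], rule allI)
            fix Z
            have "Re (t Z Z) = \<rho>\<^sup>2 * Re (?sa Z Z)" by (simp add: t_def)
            also have "\<dots> \<le> \<rho>\<^sup>2 * (\<eta> a Z)\<^sup>2" using Fset_le[OF saF] by (simp add: mult_left_mono)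
            also have "\<dots> = (\<rho> * \<eta> a Z)\<^sup>2" by (simp add: power_mult_distrib)
            also have "\<dots> \<le> (\<eta> ?b Z)\<^sup>2" using h \<rho> anng by (intro power_mono) auto
            finally show "Re (t Z Z) \<le> (\<eta> ?b Z)\<^sup>2" .
          qed
          have "Fle \<eta> ?b t (S (r k))" using smax_spec(2)[OF pm bkD] tF by (simp add: S_def)
          then have "Re (dstd t) \<le> Re (dstd (S (r k)))"
            using caseIII(2)[OF pm bkD iiib tpsd Spsd] by simp
          moreover have "Re (dstd t) = z * Re (dstd ?sa)"
          proof -
            have "dstd t = complex_of_real (\<rho>^4) * dstd ?sa"
              by (simp add: dstd_def t_def power4_eq_xxxx power2_eq_square algebra_simps)
            then show ?thesis using \<rho>4 by simp
          qed
          ultimately show "z * Re (dstd ?sa) \<le> Re (dstd (S (r k)))" by simp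
        qed
        then show "z * Re (dstd ?sa) \<le> Re (dstd s)"
          by (intro tendsto_lowerbound[OF dconv]) auto
      qed
      have "s = ?sa"
      proof (rule smax_unique[OF pm aD sF], rule ballI)
        fix t assume tF: "t \<in> Fset \<eta> a"
        have tpsd: "psd_herm_form t" using tF by (simp add: Fset_def)
        have "Re (dstd t) \<le> Re (dstd ?sa)" using samax tF FleIII[OF tpsd sapsd] by blast
        then show "Fle \<eta> a t s" using FleIII[OF tpsd spsd] key by simp
      qed
      then show ?thesis by (simp add: L_def)
    qed
  qed
  then show ?thesis using r(1) Lconv by blast
qed



theorem proposition3p9:
  fixes D :: "(complex ^ 2) set" and \<eta> :: "complex ^ 2 \<Rightarrow> complex ^ 2 \<Rightarrow> real"
  assumes "is_domain D"
    and "\<eta> \<in> classM D"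
    and "continuous_on (D \<times> UNIV) (\<lambda>(a, X). \<eta> a X)"
  shows "upper_semicontinuous_on (D \<times> UNIV) (\<lambda>(a, X). Wtilde \<eta> a X)"
proof -
  have pm: "pseudometric_on D \<eta>" using assms(2) by (simp add: classM_def)
  have oD: "open D" using assms(1) by (simp add: is_domain_def)
  note cont = assms(3)
  show ?thesis unfolding upper_semicontinuous_on_def
  proof (intro ballI allI impI)
    fix x :: "c2 \<times> c2" and e :: real assume x: "x \<in> D \<times> UNIV" and e: "e > 0"
    obtain a X where xa: "x = (a, X)" by (cases x)
    have aD: "a \<in> D" using x xa by auto
    let ?W = "\<lambda>(a, X). Wtilde \<eta> a X"
    show "\<forall>\<^sub>F y in at x within D \<times> (UNIV :: c2 set). ?W y < ?W x + e"
    proof (rule sequentially_imp_eventually_within, intro allI impI)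
      fix f assume f: "(\<forall>n. f n \<in> D \<times> (UNIV :: c2 set) \<and> f n \<noteq> x) \<and> f \<longlonglongrightarrow> x"
      show "eventually (\<lambda>n. ?W (f n) < ?W x + e) sequentially"
      proof (rule ccontr)
        assume ne: "\<not> eventually (\<lambda>n. ?W (f n) < ?W x + e) sequentially"
        have "infinite {n. \<not> ?W (f n) < ?W x + e}"
          using ne unfolding infinite_nat_iff_unbounded_le eventually_sequentially by auto
        then obtain r0 :: "nat \<Rightarrow> nat" where r0: "strict_mono r0" "\<forall>n. r0 n \<in> {n. \<not> ?W (f n) < ?W x + e}"
          using infinite_enumerate by blast
        define b where "b k = fst (f (r0 k))" for k
        define Y where "Y k = snd (f (r0 k))" for k
        have bD: "\<forall>k. b k \<in> D" using f by (auto simp: b_def mem_Times_iff)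
        have fr: "(\<lambda>k. f (r0 k)) \<longlonglongrightarrow> (a, X)"
          using LIMSEQ_subseq_LIMSEQ[OF conjunct2[OF f] r0(1)] xa by (simp add: comp_def)
        have bl: "b \<longlonglongrightarrow> a" unfolding b_def using tendsto_fst[OF fr] by simp
        have Yl: "Y \<longlonglongrightarrow> X" unfolding Y_def using tendsto_snd[OF fr] by simp
        obtain r L where rL: "strict_mono r" "(\<lambda>k. Re (smax \<eta> (b (r k)) (Y (r k)) (Y (r k)))) \<longlonglongrightarrow> L"
          "L \<le> Re (smax \<eta> a X X)"
          using core[OF pm oD cont aD bD bl Yl] by blast
        have ge: "\<forall>k. ?W x + e \<le> sqrt (Re (smax \<eta> (b (r k)) (Y (r k)) (Y (r k))))"
        proof
          fix k
          have "\<not> ?W (f (r0 (r k))) < ?W x + e" using r0(2) by blast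
          moreover have "f (r0 (r k)) = (b (r k), Y (r k))" by (simp add: b_def Y_def)
          ultimately show "?W x + e \<le> sqrt (Re (smax \<eta> (b (r k)) (Y (r k)) (Y (r k))))"
            by (simp add: Wtilde_def)
        qed
        have "(\<lambda>k. sqrt (Re (smax \<eta> (b (r k)) (Y (r k)) (Y (r k))))) \<longlonglongrightarrow> sqrt L"
          by (rule tendsto_real_sqrt[OF rL(2)])
        then have "?W x + e \<le> sqrt L" by (rule LIMSEQ_le_const) (use ge in blast)
        moreover have "sqrt L \<le> ?W x" using rL(3) xa by (simp add: Wtilde_def)
        ultimately show False using e by simp
      qed
    qed
  qed
qed


end
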